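(* Let $V$ and $W$ be finite-dimensional simple Yetter-Drinfeld modules over $H=B(n,w,\gamma)$. Then $V\cong W$ if and only if there exist $\alpha,\beta\in\Bbbk^*$ and $r,i\in\mathbb{Z}$ such that both $V$ and $W$ contain a standard element of type $(\alpha,\beta,x^rg^i)$.
   Context: $\Bbbk$ is an algebraically closed field of characteristic $0$; $n,w$ positive integers, $\gamma$ a primitive $n$-th root of unity. $H=B(n,w,\gamma)$ is the Hopf algebra generated by $x^{\pm1},g,y$ with relations $xx^{-1}=x^{-1}x=1$, $xg=gx$, $xy=yx$, $yg=\gamma gy$, $y^n=1-x^w=1-g^n$, with $\Delta(x)=x\otimes x$, $\Delta(g)=g\otimes g$, $\Delta(y)=y\otimes g+1\otimes y$, $\varepsilon(x)=\varepsilon(g)=1$, $\varepsilon(y)=0$, $S(x)=x^{-1}$, $S(g)=g^{-1}$, $S(y)=-yg^{-1}$; $G(H)=\{g^jx^k\}$. A (left-left) Yetter-Drinfeld module is a left $H$-module, left $H$-comodule $(V,\cdot,\delta)$ with $\delta(h\cdot v)=h_{(1)}v_{(-1)}S(h_{(3)})\otimes h_{(2)}\cdot v_{(0)}$; simple means no nonzero proper Yetter-Drinfeld submodules; isomorphism means isomorphism of Yetter-Drinfeld modules. A nonzero $v\in V$ is a standard element of type $(\alpha,\beta,h)$ if $h\in G(H)$, $\alpha,\beta\in\Bbbk^*$, $x\cdot v=\alpha v$, $g\cdot v=\beta v$, $\delta(v)=h\otimes v$. *)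

theory Defs
  imports "HOL-Computational_Algebra.Polynomial"
begin

text \<open>H has the k-basis x^k g^j y^l (k integer, 0 <= j,l < n); an element of H is
  represented by its coefficient function on index triples (k,j,l).
  Elements of H (x) H are coefficient functions on pairs of such triples.\<close>

type_synonym idx = "int \<times> nat \<times> nat"

definition valid_idx :: "nat \<Rightarrow> idx \<Rightarrow> bool" where
  "valid_idx n p \<longleftrightarrow> fst (snd p) < n \<and> snd (snd p) < n"

definition fsupp :: "('a \<Rightarrow> 'b::zero) \<Rightarrow> 'a set" where
  "fsupp f = {p. f p \<noteq> 0}"

definition bsingle :: "'a \<Rightarrow> 'b::zero \<Rightarrow> 'a \<Rightarrow> 'b" where
  "bsingle p c = (\<lambda>q. if q = p then c else 0)"

text \<open>Product of basis elements: (x^k g^j y^l)(x^k' g^j' y^l')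
  = gamma^(l j') x^(k+k') g^(j+j') y^(l+l'), reduced using g^n = x^w, y^n = 1 - x^w.\<close>
definition mono_mult :: "nat \<Rightarrow> nat \<Rightarrow> 'k::field \<Rightarrow> idx \<Rightarrow> idx \<Rightarrow> idx \<Rightarrow> 'k" where
  "mono_mult n w \<gamma> p p' = (case p of (k, j, l) \<Rightarrow> case p' of (k', j', l') \<Rightarrow>
     let c = \<gamma> ^ (l * j'); a = j + j'; b = l + l';
         K = k + k' + (if a < n then 0 else int w);
         a' = (if a < n then a else a - n)
     in if b < n then bsingle (K, a', b) c
        else (\<lambda>t. bsingle (K, a', b - n) c t - bsingle (K + int w, a', b - n) c t))"

definition hmult :: "nat \<Rightarrow> nat \<Rightarrow> 'k::field \<Rightarrow> (idx \<Rightarrow> 'k) \<Rightarrow> (idx \<Rightarrow> 'k) \<Rightarrow> idx \<Rightarrow> 'k" where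
  "hmult n w \<gamma> a b = (\<lambda>t. \<Sum>p\<in>fsupp a. \<Sum>q\<in>fsupp b. a p * b q * mono_mult n w \<gamma> p q t)"

definition hbasis :: "idx \<Rightarrow> idx \<Rightarrow> 'k::field" where
  "hbasis p = bsingle p 1"

definition hone :: "idx \<Rightarrow> 'k::field" where
  "hone = bsingle (0, 0, 0) 1"

fun hpow :: "nat \<Rightarrow> nat \<Rightarrow> 'k::field \<Rightarrow> (idx \<Rightarrow> 'k) \<Rightarrow> nat \<Rightarrow> idx \<Rightarrow> 'k" where
  "hpow n w \<gamma> a 0 = hone"
| "hpow n w \<gamma> a (Suc m) = hmult n w \<gamma> a (hpow n w \<gamma> a m)"

text \<open>Index of the group-like x^r g^i (r, i integers), using g^n = x^w.\<close>
definition gidx :: "nat \<Rightarrow> nat \<Rightarrow> int \<Rightarrow> int \<Rightarrow> idx" where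
  "gidx n w r i = (r + int w * (i div int n), nat (i mod int n), 0)"

definition hgl :: "nat \<Rightarrow> nat \<Rightarrow> int \<Rightarrow> int \<Rightarrow> idx \<Rightarrow> 'k::field" where
  "hgl n w r i = bsingle (gidx n w r i) 1"

definition hx :: "nat \<Rightarrow> nat \<Rightarrow> idx \<Rightarrow> 'k::field" where "hx n w = hgl n w 1 0"
definition hxinv :: "nat \<Rightarrow> nat \<Rightarrow> idx \<Rightarrow> 'k::field" where "hxinv n w = hgl n w (-1) 0"
definition hg :: "nat \<Rightarrow> nat \<Rightarrow> idx \<Rightarrow> 'k::field" where "hg n w = hgl n w 0 1"
definition hginv :: "nat \<Rightarrow> nat \<Rightarrow> idx \<Rightarrow> 'k::field" where "hginv n w = hgl n w 0 (-1)"

text \<open>y; when n = 1 the relation y = y^1 = 1 - x^w is used.\<close>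
definition hy :: "nat \<Rightarrow> nat \<Rightarrow> idx \<Rightarrow> 'k::field" where
  "hy n w = (if 1 < n then bsingle (0, 0, 1) 1
             else (\<lambda>t. bsingle (0, 0, 0) 1 t - bsingle (int w, 0, 0) 1 t))"

text \<open>Antipode on basis: S(x^k g^j y^l) = S(y)^l S(g)^j S(x)^k,
  with S(y) = - y g^-1, S(g) = g^-1, S(x) = x^-1.\<close>
definition hS :: "nat \<Rightarrow> nat \<Rightarrow> 'k::field \<Rightarrow> idx \<Rightarrow> idx \<Rightarrow> 'k" where
  "hS n w \<gamma> p = (case p of (k, j, l) \<Rightarrow>
     hmult n w \<gamma> (hpow n w \<gamma> (\<lambda>t. - hmult n w \<gamma> (hy n w) (hginv n w) t) l)
       (hmult n w \<gamma> (hpow n w \<gamma> (hginv n w) j) (hgl n w (-k) 0)))"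

definition heps :: "idx \<Rightarrow> 'k::field" where
  "heps p = (if snd (snd p) = 0 then 1 else 0)"

definition ttensor :: "(idx \<Rightarrow> 'k::field) \<Rightarrow> (idx \<Rightarrow> 'k) \<Rightarrow> idx \<times> idx \<Rightarrow> 'k" where
  "ttensor a b = (\<lambda>(s, t). a s * b t)"

definition tmult :: "nat \<Rightarrow> nat \<Rightarrow> 'k::field \<Rightarrow> (idx \<times> idx \<Rightarrow> 'k) \<Rightarrow> (idx \<times> idx \<Rightarrow> 'k) \<Rightarrow> idx \<times> idx \<Rightarrow> 'k" where
  "tmult n w \<gamma> A B = (\<lambda>(s, t). \<Sum>(p1, p2)\<in>fsupp A. \<Sum>(q1, q2)\<in>fsupp B.
      A (p1, p2) * B (q1, q2) * mono_mult n w \<gamma> p1 q1 s * mono_mult n w \<gamma> p2 q2 t)"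

definition tone :: "idx \<times> idx \<Rightarrow> 'k::field" where
  "tone = bsingle ((0, 0, 0), (0, 0, 0)) 1"

fun tpow :: "nat \<Rightarrow> nat \<Rightarrow> 'k::field \<Rightarrow> (idx \<times> idx \<Rightarrow> 'k) \<Rightarrow> nat \<Rightarrow> idx \<times> idx \<Rightarrow> 'k" where
  "tpow n w \<gamma> A 0 = tone"
| "tpow n w \<gamma> A (Suc m) = tmult n w \<gamma> A (tpow n w \<gamma> A m)"

text \<open>Coproduct on basis: Delta(x^k g^j y^l) = Delta(x)^k Delta(g)^j Delta(y)^l, with
  Delta(x) = x (x) x, Delta(g) = g (x) g, Delta(y) = y (x) g + 1 (x) y.\<close>
definition hDelta :: "nat \<Rightarrow> nat \<Rightarrow> 'k::field \<Rightarrow> idx \<Rightarrow> idx \<times> idx \<Rightarrow> 'k" where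
  "hDelta n w \<gamma> p = (case p of (k, j, l) \<Rightarrow>
     tmult n w \<gamma>
       (if 0 \<le> k then tpow n w \<gamma> (ttensor (hx n w) (hx n w)) (nat k)
        else tpow n w \<gamma> (ttensor (hxinv n w) (hxinv n w)) (nat (- k)))
       (tmult n w \<gamma> (tpow n w \<gamma> (ttensor (hg n w) (hg n w)) j)
          (tpow n w \<gamma> (\<lambda>st. ttensor (hy n w) (hg n w) st + ttensor hone (hy n w) st) l)))"

definition hact :: "('k::field \<Rightarrow> 'v \<Rightarrow> 'v) \<Rightarrow> (idx \<Rightarrow> 'v \<Rightarrow> 'v) \<Rightarrow> (idx \<Rightarrow> 'k) \<Rightarrow> 'v \<Rightarrow> 'v::ab_group_add" where
  "hact scale act a v = (\<Sum>p\<in>fsupp a. scale (a p) (act p v))"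

text \<open>A left-left Yetter-Drinfeld module over H on the k-vector space ('v, scale):
  act p is the action of the basis element p; the coaction is
  delta(v) = sum_t (basis t) (x) co v t.\<close>
definition is_YD :: "nat \<Rightarrow> nat \<Rightarrow> 'k::field \<Rightarrow> ('k \<Rightarrow> 'v::ab_group_add \<Rightarrow> 'v)
    \<Rightarrow> (idx \<Rightarrow> 'v \<Rightarrow> 'v) \<Rightarrow> ('v \<Rightarrow> idx \<Rightarrow> 'v) \<Rightarrow> bool" where
  "is_YD n w \<gamma> scale act co \<longleftrightarrow>
     vector_space scale \<and>
     (\<forall>p. valid_idx n p \<longrightarrow> Vector_Spaces.linear scale scale (act p)) \<and>
     (\<forall>t. Vector_Spaces.linear scale scale (\<lambda>v. co v t)) \<and>
     (\<forall>v. act (0, 0, 0) v = v) \<and>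
     (\<forall>p q v. valid_idx n p \<longrightarrow> valid_idx n q \<longrightarrow>
        act p (act q v) = hact scale act (mono_mult n w \<gamma> p q) v) \<and>
     (\<forall>v. finite (fsupp (co v)) \<and> fsupp (co v) \<subseteq> {t. valid_idx n t}) \<and>
     (\<forall>v. (\<Sum>t\<in>fsupp (co v). scale (heps t) (co v t)) = v) \<and>
     (\<forall>v s t. (\<Sum>p\<in>fsupp (co v). scale (hDelta n w \<gamma> p (s, t)) (co v p)) = co (co v s) t) \<and>
     (\<forall>p v t. valid_idx n p \<longrightarrow>
        co (act p v) t =
          (\<Sum>(a, b)\<in>fsupp (hDelta n w \<gamma> p). \<Sum>(a1, a2)\<in>fsupp (hDelta n w \<gamma> a).
             \<Sum>q\<in>fsupp (co v).
               scale (hDelta n w \<gamma> p (a, b) * hDelta n w \<gamma> a (a1, a2) *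
                      hmult n w \<gamma> (hmult n w \<gamma> (hbasis a1) (hbasis q)) (hS n w \<gamma> b) t)
                     (act a2 (co v q))))"

definition YD_submodule :: "nat \<Rightarrow> ('k::field \<Rightarrow> 'v::ab_group_add \<Rightarrow> 'v)
    \<Rightarrow> (idx \<Rightarrow> 'v \<Rightarrow> 'v) \<Rightarrow> ('v \<Rightarrow> idx \<Rightarrow> 'v) \<Rightarrow> 'v set \<Rightarrow> bool" where
  "YD_submodule n scale act co U \<longleftrightarrow>
     module.subspace scale U \<and>
     (\<forall>p v. valid_idx n p \<longrightarrow> v \<in> U \<longrightarrow> act p v \<in> U) \<and>
     (\<forall>v t. v \<in> U \<longrightarrow> co v t \<in> U)"

definition YD_simple :: "nat \<Rightarrow> ('k::field \<Rightarrow> 'v::ab_group_add \<Rightarrow> 'v)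
    \<Rightarrow> (idx \<Rightarrow> 'v \<Rightarrow> 'v) \<Rightarrow> ('v \<Rightarrow> idx \<Rightarrow> 'v) \<Rightarrow> bool" where
  "YD_simple n scale act co \<longleftrightarrow>
     (UNIV :: 'v set) \<noteq> {0} \<and>
     (\<forall>U. YD_submodule n scale act co U \<longrightarrow> U = {0} \<or> U = UNIV)"

definition fin_dim :: "('k::field \<Rightarrow> 'v::ab_group_add \<Rightarrow> 'v) \<Rightarrow> bool" where
  "fin_dim scale \<longleftrightarrow> (\<exists>B. finite B \<and> module.span scale B = UNIV)"

definition YD_iso :: "nat \<Rightarrow> ('k::field \<Rightarrow> 'v::ab_group_add \<Rightarrow> 'v) \<Rightarrow> (idx \<Rightarrow> 'v \<Rightarrow> 'v) \<Rightarrow> ('v \<Rightarrow> idx \<Rightarrow> 'v)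
    \<Rightarrow> ('k \<Rightarrow> 'u::ab_group_add \<Rightarrow> 'u) \<Rightarrow> (idx \<Rightarrow> 'u \<Rightarrow> 'u) \<Rightarrow> ('u \<Rightarrow> idx \<Rightarrow> 'u) \<Rightarrow> bool" where
  "YD_iso n sV actV coV sW actW coW \<longleftrightarrow>
     (\<exists>f. bij f \<and> Vector_Spaces.linear sV sW f \<and>
        (\<forall>p v. valid_idx n p \<longrightarrow> f (actV p v) = actW p (f v)) \<and>
        (\<forall>v t. f (coV v t) = coW (f v) t))"

definition standard_elem :: "nat \<Rightarrow> nat \<Rightarrow> ('k::field \<Rightarrow> 'v::ab_group_add \<Rightarrow> 'v) \<Rightarrow> (idx \<Rightarrow> 'v \<Rightarrow> 'v)
    \<Rightarrow> ('v \<Rightarrow> idx \<Rightarrow> 'v) \<Rightarrow> 'k \<Rightarrow> 'k \<Rightarrow> int \<Rightarrow> int \<Rightarrow> 'v \<Rightarrow> bool" where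
  "standard_elem n w scale act co \<alpha> \<beta> r i v \<longleftrightarrow>
     v \<noteq> 0 \<and> \<alpha> \<noteq> 0 \<and> \<beta> \<noteq> 0 \<and>
     hact scale act (hx n w) v = scale \<alpha> v \<and>
     hact scale act (hg n w) v = scale \<beta> v \<and>
     co v = bsingle (gidx n w r i) v"

definition alg_closed :: "'k::field itself \<Rightarrow> bool" where
  "alg_closed _ \<longleftrightarrow> (\<forall>p :: 'k poly. 0 < degree p \<longrightarrow> (\<exists>z. poly p z = 0))"

definition primitive_root :: "nat \<Rightarrow> 'k::field \<Rightarrow> bool" where
  "primitive_root n \<gamma> \<longleftrightarrow> \<gamma> ^ n = 1 \<and> (\<forall>m. 0 < m \<and> m < n \<longrightarrow> \<gamma> ^ m \<noteq> 1)"

end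

theory Submission
  imports Defs "HOL-Library.Product_Plus"
begin

lemma fsupp_bsingle: "c \<noteq> 0 \<Longrightarrow> fsupp (bsingle p c) = {p}"
  by (auto simp: fsupp_def bsingle_def)

lemma gidx_norm: "0 < n \<Longrightarrow> j < n \<Longrightarrow> gidx n w k (int j) = (k, j, 0)"
  by (simp add: gidx_def)

lemma mono_mult_gl:
  assumes "0 < n"
  shows "mono_mult n w \<gamma> (k, j, 0) (k', j', 0) =
     bsingle (k + k' + (if j + j' < n then 0 else int w), if j + j' < n then j + j' else j + j' - n, 0) 1"
  using assms by (simp add: mono_mult_def Let_def)

lemma gidx_mult:
  assumes n: "0 < n"
  shows "mono_mult n w \<gamma> (gidx n w r i) (gidx n w r' i') = bsingle (gidx n w (r + r') (i + i')) 1"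
proof -
  define a where "a = i mod int n"
  define b where "b = i' mod int n"
  have d: "(i + i') div int n = i div int n + i' div int n + (a + b) div int n"
    unfolding a_def b_def by (rule div_add1_eq)
  have m: "(i + i') mod int n = (a + b) mod int n"
    unfolding a_def b_def by (rule mod_add_eq[symmetric])
  have b1: "0 \<le> a" "a < int n" "0 \<le> b" "b < int n" using n by (auto simp: a_def b_def)
  have e: "gidx n w r i = (r + int w * (i div int n), nat a, 0)" "gidx n w r' i' = (r' + int w * (i' div int n), nat b, 0)"
    by (simp_all add: gidx_def a_def b_def)
  show ?thesis
  proof (cases "a + b < int n")
    case True
    then have "(a + b) div int n = 0" "(a + b) mod int n = a + b"
      using b1 by auto
    moreover have "nat a + nat b < n" using True b1 by linarith
    ultimately show ?thesis using b1 d m unfolding e mono_mult_gl[OF n]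
      by (simp add: gidx_def algebra_simps nat_add_distrib)
  next
    case False
    have s: "a + b = (a + b - int n) + int n" by simp
    have t: "0 \<le> a + b - int n" "a + b - int n < int n" using False b1 by auto
    define c where "c = a + b - int n"
    have s': "a + b = c + int n" by (simp add: c_def)
    have t': "0 \<le> c" "c < int n" using t by (auto simp: c_def)
    have "(c + int n) div int n = 1" using n t' by (simp add: div_add_self2 div_pos_pos_trivial)
    moreover have "(c + int n) mod int n = c" using t' by (simp add: mod_pos_pos_trivial)
    ultimately have "(a + b) div int n = 1" "(a + b) mod int n = a + b - int n"
      unfolding s' by (auto simp: c_def)
    moreover have "\<not> nat a + nat b < n" using False b1 by linarith
    ultimately have g: "gidx n w (r + r') (i + i') = (r + r' + int w * (i div int n + i' div int n + 1), nat (a + b - int n), 0)"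
      using d m by (simp add: gidx_def)
    have "nat a + nat b - n = nat (a + b - int n)" using b1 False by linarith
    with \<open>\<not> nat a + nat b < n\<close> show ?thesis unfolding e mono_mult_gl[OF n] g
      by (simp add: algebra_simps)
  qed
qed

lemma hmult_bsingle:
  assumes "a \<noteq> 0" "b \<noteq> 0"
  shows "hmult n w \<gamma> (bsingle p a) (bsingle q b) = (\<lambda>t. a * b * mono_mult n w \<gamma> p q t)"
  using assms unfolding hmult_def fsupp_bsingle[OF assms(1)] fsupp_bsingle[OF assms(2)] by (simp add: bsingle_def)

lemma hmult_hgl: "0 < n \<Longrightarrow> hmult n w \<gamma> (hgl n w r i) (hgl n w r' i') = hgl n w (r + r') (i + i')"
  by (simp add: hgl_def hmult_bsingle gidx_mult)

lemma gidx00: "gidx n w 0 0 = (0, 0, 0)" by (simp add: gidx_def)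

lemma hone_hgl: "hone = hgl n w 0 0"
  by (simp add: hone_def hgl_def gidx00)

lemma hpow_hgl: "0 < n \<Longrightarrow> hpow n w \<gamma> (hgl n w r i) m = hgl n w (int m * r) (int m * i)"
  by (induction m) (simp_all add: hone_hgl[of n w] hmult_hgl algebra_simps)

lemma hS_gl:
  assumes "0 < n" "j < n"
  shows "hS n w \<gamma> (k, j, 0) = hgl n w (-k) (- int j)"
  using assms by (simp add: hS_def hone_hgl[of n w] hmult_hgl hpow_hgl hginv_def)

definition tgl :: "nat \<Rightarrow> nat \<Rightarrow> int \<Rightarrow> int \<Rightarrow> idx \<times> idx \<Rightarrow> 'k::field" where
  "tgl n w r i = bsingle (gidx n w r i, gidx n w r i) 1"

lemma tmult_bsingle:
  assumes "a \<noteq> 0" "b \<noteq> 0"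
  shows "tmult n w \<gamma> (bsingle (p1, p2) a) (bsingle (q1, q2) b) = (\<lambda>(s, t). a * b * mono_mult n w \<gamma> p1 q1 s * mono_mult n w \<gamma> p2 q2 t)"
  using assms unfolding tmult_def fsupp_bsingle[OF assms(1)] fsupp_bsingle[OF assms(2)] by (simp add: bsingle_def)

lemma tmult_tgl: "0 < n \<Longrightarrow> tmult n w \<gamma> (tgl n w r i) (tgl n w r' i') = tgl n w (r + r') (i + i')"
  unfolding tgl_def by (subst tmult_bsingle) (auto simp: gidx_mult bsingle_def)

lemma tone_tgl: "tone = tgl n w 0 0"
  by (simp add: tone_def tgl_def gidx00)

lemma tpow_tgl: "0 < n \<Longrightarrow> tpow n w \<gamma> (tgl n w r i) m = tgl n w (int m * r) (int m * i)"
  by (induction m) (simp_all add: tone_tgl[of n w] tmult_tgl algebra_simps)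

lemma ttensor_hgl: "ttensor (hgl n w r i) (hgl n w r i) = tgl n w r i"
  by (auto simp: ttensor_def hgl_def tgl_def bsingle_def)

lemma hDelta_gl:
  assumes "0 < n" "j < n"
  shows "hDelta n w \<gamma> (k, j, 0) = tgl n w k (int j)"
  using assms by (simp add: hDelta_def hx_def hxinv_def hg_def ttensor_hgl tpow_tgl tmult_tgl tone_tgl[of n w])

lemma mono_mult_supp:
  assumes "valid_idx n p" "valid_idx n q" "snd (snd p) + snd (snd q) < n" "mono_mult n w \<gamma> p q s \<noteq> 0"
  shows "valid_idx n s \<and> snd (snd s) = snd (snd p) + snd (snd q)"
proof -
  obtain k j l where p: "p = (k, j, l)" by (cases p) auto
  obtain k' j' l' where q: "q = (k', j', l')" by (cases q) auto
  show ?thesis using assms unfolding p q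
    by (auto simp: mono_mult_def Let_def bsingle_def valid_idx_def split: if_splits)
qed

lemma mono_mult_valid:
  assumes "valid_idx n p" "valid_idx n q" "mono_mult n w \<gamma> p q s \<noteq> 0"
  shows "valid_idx n s"
proof -
  obtain k j l where p: "p = (k, j, l)" by (cases p) auto
  obtain k' j' l' where q: "q = (k', j', l')" by (cases q) auto
  show ?thesis using assms unfolding p q
    by (auto simp: mono_mult_def Let_def bsingle_def valid_idx_def split: if_splits)
qed

definition good :: "nat \<Rightarrow> nat \<Rightarrow> (idx \<times> idx \<Rightarrow> 'k::field) \<Rightarrow> bool" where
  "good n d A \<longleftrightarrow> (\<forall>s t. A (s, t) \<noteq> 0 \<longrightarrow> valid_idx n s \<and> valid_idx n t \<and> snd (snd s) + snd (snd t) = d)"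

lemma tmult_good:
  assumes A: "good n d1 A" and B: "good n d2 B" and d: "d1 + d2 < n"
  shows "good n (d1 + d2) (tmult n w \<gamma> A B)"
  unfolding good_def
proof (intro allI impI)
  fix s t assume "tmult n w \<gamma> A B (s, t) \<noteq> 0"
  then have "(\<Sum>x\<in>fsupp A. (case x of (p1, p2) \<Rightarrow> \<Sum>(q1, q2)\<in>fsupp B.
      A (p1, p2) * B (q1, q2) * mono_mult n w \<gamma> p1 q1 s * mono_mult n w \<gamma> p2 q2 t)) \<noteq> 0"
    unfolding tmult_def by simp
  then obtain x where x: "x \<in> fsupp A" "(case x of (p1, p2) \<Rightarrow> \<Sum>(q1, q2)\<in>fsupp B.
      A (p1, p2) * B (q1, q2) * mono_mult n w \<gamma> p1 q1 s * mono_mult n w \<gamma> p2 q2 t) \<noteq> 0"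
    by (meson sum.not_neutral_contains_not_neutral)
  obtain p1 p2 where xp: "x = (p1, p2)" by (cases x) auto
  from x(2) have "(\<Sum>y\<in>fsupp B. (case y of (q1, q2) \<Rightarrow>
      A (p1, p2) * B (q1, q2) * mono_mult n w \<gamma> p1 q1 s * mono_mult n w \<gamma> p2 q2 t)) \<noteq> 0"
    unfolding xp by simp
  then obtain y where y: "y \<in> fsupp B" "(case y of (q1, q2) \<Rightarrow>
      A (p1, p2) * B (q1, q2) * mono_mult n w \<gamma> p1 q1 s * mono_mult n w \<gamma> p2 q2 t) \<noteq> 0"
    by (meson sum.not_neutral_contains_not_neutral)
  obtain q1 q2 where yq: "y = (q1, q2)" by (cases y) auto
  from y(2) have pq: "A (p1, p2) \<noteq> 0" "B (q1, q2) \<noteq> 0"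
    "mono_mult n w \<gamma> p1 q1 s \<noteq> 0" "mono_mult n w \<gamma> p2 q2 t \<noteq> 0"
    unfolding yq by auto
  from A pq(1) have a: "valid_idx n p1" "valid_idx n p2" "snd (snd p1) + snd (snd p2) = d1"
    unfolding good_def by blast+
  from B pq(2) have b: "valid_idx n q1" "valid_idx n q2" "snd (snd q1) + snd (snd q2) = d2"
    unfolding good_def by blast+
  have "valid_idx n s \<and> snd (snd s) = snd (snd p1) + snd (snd q1)"
    by (rule mono_mult_supp[OF a(1) b(1) _ pq(3)]) (use a b d in auto)
  moreover have "valid_idx n t \<and> snd (snd t) = snd (snd p2) + snd (snd q2)"
    by (rule mono_mult_supp[OF a(2) b(2) _ pq(4)]) (use a b d in auto)
  ultimately show "valid_idx n s \<and> valid_idx n t \<and> snd (snd s) + snd (snd t) = d1 + d2"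
    using a b by auto
qed

lemma valid_gidx: assumes "0 < n" shows "valid_idx n (gidx n w r i)"
proof -
  have "nat (i mod int n) < n" using assms by (simp add: nat_less_iff)
  then show ?thesis using assms by (simp add: valid_idx_def gidx_def)
qed

lemma gidx_l: "snd (snd (gidx n w r i)) = 0" by (simp add: gidx_def)

lemma tgl_good: "0 < n \<Longrightarrow> good n 0 (tgl n w r i :: _ \<Rightarrow> 'a::field)"
  unfolding good_def tgl_def bsingle_def
proof (intro allI impI)
  fix s t assume "0 < n" "(if (s, t) = (gidx n w r i, gidx n w r i) then 1 else 0) \<noteq> (0::'a)"
  then have "s = gidx n w r i" "t = gidx n w r i" by (auto split: if_splits)
  then show "valid_idx n s \<and> valid_idx n t \<and> snd (snd s) + snd (snd t) = 0"
    using valid_gidx[OF \<open>0 < n\<close>] gidx_l by simp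
qed

lemma Y_good:
  assumes "1 < n"
  shows "good n 1 (\<lambda>st. ttensor (hy n w) (hg n w) st + ttensor hone (hy n w) st)"
proof -
  have g: "gidx n w 0 1 = (0, 1, 0)" using assms by (simp add: gidx_def)
  show ?thesis using assms
    by (auto simp: good_def ttensor_def hy_def hg_def hgl_def g hone_def bsingle_def valid_idx_def)
qed

lemma tpow_good:
  assumes "good n 1 Y" "m < n" "0 < n"
  shows "good n m (tpow n w \<gamma> Y m)"
  using assms(2)
proof (induction m)
  case 0
  then show ?case using tgl_good[OF assms(3)] by (simp add: tone_tgl[of n w])
next
  case (Suc m)
  then show ?case using tmult_good[OF assms(1) Suc.IH, of w \<gamma>] by simp
qed

lemma hDelta_good:
  assumes n: "0 < n" and v: "valid_idx n p"
  shows "good n (snd (snd p)) (hDelta n w \<gamma> p)"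
proof -
  obtain k j l where p: "p = (k, j, l)" by (cases p) auto
  have jl: "j < n" "l < n" using v by (auto simp: p valid_idx_def)
  have X: "good n 0 (if 0 \<le> k then tpow n w \<gamma> (ttensor (hx n w) (hx n w)) (nat k)
        else tpow n w \<gamma> (ttensor (hxinv n w) (hxinv n w)) (nat (- k)))"
    using tgl_good[OF n] by (simp add: hx_def hxinv_def ttensor_hgl tpow_tgl n)
  have G: "good n 0 (tpow n w \<gamma> (ttensor (hg n w) (hg n w)) j)"
    using tgl_good[OF n] by (simp add: hg_def ttensor_hgl tpow_tgl n)
  have Yl: "good n l (tpow n w \<gamma> (\<lambda>st. ttensor (hy n w) (hg n w) st + ttensor hone (hy n w) st) l)"
  proof (cases "l = 0")
    case True then show ?thesis using tgl_good[OF n] by (simp add: tone_tgl[of n w])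
  next
    case False then have "1 < n" using jl by auto
    then show ?thesis using tpow_good Y_good jl(2) n by blast
  qed
  have H: "good n (0 + l) (tmult n w \<gamma> (tpow n w \<gamma> (ttensor (hg n w) (hg n w)) j)
          (tpow n w \<gamma> (\<lambda>st. ttensor (hy n w) (hg n w) st + ttensor hone (hy n w) st) l))"
    by (rule tmult_good[OF G Yl]) (use jl in simp)
  have "good n (0 + (0 + l)) (tmult n w \<gamma> (if 0 \<le> k then tpow n w \<gamma> (ttensor (hx n w) (hx n w)) (nat k)
        else tpow n w \<gamma> (ttensor (hxinv n w) (hxinv n w)) (nat (- k))) (tmult n w \<gamma> (tpow n w \<gamma> (ttensor (hg n w) (hg n w)) j)
          (tpow n w \<gamma> (\<lambda>st. ttensor (hy n w) (hg n w) st + ttensor hone (hy n w) st) l)))"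
    by (rule tmult_good[OF X H]) (use jl in simp)
  then have "good n (0 + (0 + l)) (hDelta n w \<gamma> p)"
    unfolding p hDelta_def by simp
  then show ?thesis by (simp add: p)
qed

lemma lin_add: "Vector_Spaces.linear s1 s2 f \<Longrightarrow> f (x + y) = f x + f y"
  by (simp add: Vector_Spaces.linear_iff)
lemma lin_scale: "Vector_Spaces.linear s1 s2 f \<Longrightarrow> f (s1 c x) = s2 c (f x)"
  by (simp add: Vector_Spaces.linear_iff)
lemma lin_zero: "Vector_Spaces.linear s1 s2 f \<Longrightarrow> f 0 = 0"
  using module_hom.zero module_hom_iff_linear by blast
lemma lin_sum: "Vector_Spaces.linear s1 s2 f \<Longrightarrow> f (sum g A) = (\<Sum>a\<in>A. f (g a))"
  using module_hom.sum module_hom_iff_linear by blast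
lemma lin_diff: "Vector_Spaces.linear s1 s2 f \<Longrightarrow> f (x - y) = f x - f y"
  using module_hom.diff module_hom_iff_linear by blast

primrec opit :: "('v \<Rightarrow> 'v) \<Rightarrow> ('k::field \<Rightarrow> 'v::ab_group_add \<Rightarrow> 'v) \<Rightarrow> 'k \<Rightarrow> 'k \<Rightarrow> nat \<Rightarrow> 'v \<Rightarrow> 'v" where
  "opit Gf sc \<beta> \<gamma> 0 x = x"
| "opit Gf sc \<beta> \<gamma> (Suc m) x = Gf (opit Gf sc \<beta> \<gamma> m x) - sc (\<beta> / \<gamma> ^ Suc m) (opit Gf sc \<beta> \<gamma> m x)"

lemma span_closed_lin:
  assumes vs: "vector_space s" and L: "Vector_Spaces.linear s s L"
    and G: "\<And>g. g \<in> Gs \<Longrightarrow> L g \<in> module.span s Gs" and x: "x \<in> module.span s Gs"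
  shows "L x \<in> module.span s Gs"
proof -
  interpret vector_space s by (rule vs)
  have "subspace {x. L x \<in> span Gs}" unfolding subspace_def
    using lin_zero[OF L] lin_add[OF L] lin_scale[OF L] span_zero span_add span_scale by auto
  from span_induct[OF x this] G show ?thesis by auto
qed

locale hm =
  fixes n w :: nat and \<gamma> :: "'k::field" and s :: "'k \<Rightarrow> 'v::ab_group_add \<Rightarrow> 'v" and act :: "idx \<Rightarrow> 'v \<Rightarrow> 'v"
  assumes n: "0 < n" and gnz: "\<gamma> \<noteq> 0" and vs: "vector_space s"
    and lin: "\<And>p. valid_idx n p \<Longrightarrow> Vector_Spaces.linear s s (act p)"
    and one: "\<And>v. act (0, 0, 0) v = v"
    and mult: "\<And>p q v. valid_idx n p \<Longrightarrow> valid_idx n q \<Longrightarrow> act p (act q v) = hact s act (mono_mult n w \<gamma> p q) v"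
begin

sublocale vector_space s by (rule vs)

lemma hact_bsingle: assumes "c \<noteq> 0" shows "hact s act (bsingle p c) v = s c (act p v)"
  unfolding hact_def fsupp_bsingle[OF assms] by (simp add: bsingle_def)

lemma act_scale: "valid_idx n p \<Longrightarrow> act p (s c v) = s c (act p v)"
  using lin lin_scale by blast
lemma act_add: "valid_idx n p \<Longrightarrow> act p (v + v') = act p v + act p v'"
  using lin lin_add by blast
lemma act_zero: "valid_idx n p \<Longrightarrow> act p 0 = 0"
  using lin lin_zero by blast

lemma act_gl: "act (gidx n w r i) (act (gidx n w r' i') v) = act (gidx n w (r + r') (i + i')) v"
  using mult[OF valid_gidx[OF n] valid_gidx[OF n]] by (simp add: gidx_mult[OF n] hact_bsingle)

lemma act_gidx00: "act (gidx n w 0 0) v = v"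
  by (simp add: gidx00 one)

lemma std_gl:
  assumes X: "act (gidx n w 1 0) z = s \<alpha> z" and G: "act (gidx n w 0 1) z = s \<beta> z" and a: "\<alpha> \<noteq> 0"
  shows "\<exists>\<theta>. act (gidx n w a (int b)) z = s \<theta> z"
proof -
  have Xi: "act (gidx n w (-1) 0) z = s (1 / \<alpha>) z"
  proof -
    have "act (gidx n w (-1) 0) (act (gidx n w 1 0) z) = z"
      using act_gl[of "-1" 0 1 0 z] act_gidx00 by simp
    then have "s \<alpha> (act (gidx n w (-1) 0) z) = z"
      using X act_scale[OF valid_gidx[OF n]] by simp
    then have "s (1 / \<alpha>) (s \<alpha> (act (gidx n w (-1) 0) z)) = s (1 / \<alpha>) z" by simp
    then show ?thesis using a by simp
  qed
  have A: "\<exists>\<theta>. act (gidx n w a 0) z = s \<theta> z" for a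
  proof (induction a rule: int_induct[where k = 0])
    case base
    then show ?case using act_gidx00 by (intro exI[of _ 1]) simp
  next
    case (step1 i)
    then obtain \<theta> where t: "act (gidx n w i 0) z = s \<theta> z" by blast
    have "act (gidx n w (i + 1) 0) z = act (gidx n w 1 0) (act (gidx n w i 0) z)"
      using act_gl[of 1 0 i 0 z] by (simp add: add.commute)
    also have "\<dots> = s (\<theta> * \<alpha>) z" using t X act_scale[OF valid_gidx[OF n]] by simp
    finally show ?case by blast
  next
    case (step2 i)
    then obtain \<theta> where t: "act (gidx n w i 0) z = s \<theta> z" by blast
    have "act (gidx n w (i - 1) 0) z = act (gidx n w (-1) 0) (act (gidx n w i 0) z)"
      using act_gl[of "-1" 0 i 0 z] by simp
    also have "\<dots> = s (\<theta> * (1 / \<alpha>)) z" using t Xi act_scale[OF valid_gidx[OF n]] by simp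
    finally show ?case by blast
  qed
  show ?thesis
  proof (induction b)
    case 0
    then show ?case using A by simp
  next
    case (Suc b)
    then obtain \<theta> where t: "act (gidx n w a (int b)) z = s \<theta> z" by blast
    have "act (gidx n w a (int (Suc b))) z = act (gidx n w 0 1) (act (gidx n w a (int b)) z)"
      using act_gl[of 0 1 a "int b" z] by (simp add: add.commute)
    also have "\<dots> = s (\<theta> * \<beta>) z" using t G act_scale[OF valid_gidx[OF n]] by simp
    finally show ?case by blast
  qed
qed

lemma mono_mult_00l: "j < n \<Longrightarrow> l < n \<Longrightarrow> mono_mult n w \<gamma> (0, 0, l) (k, j, 0) = bsingle (k, j, l) (\<gamma> ^ (l * j))"
  by (simp add: mono_mult_def Let_def)

lemma std_gen:
  assumes X: "act (gidx n w 1 0) z = s \<alpha> z" and G: "act (gidx n w 0 1) z = s \<beta> z" and a: "\<alpha> \<noteq> 0"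
    and v: "valid_idx n (k, j, l)"
  shows "\<exists>c. act (k, j, l) z = s c (act (0, 0, l) z)"
proof -
  have jl: "j < n" "l < n" using v by (auto simp: valid_idx_def)
  obtain \<theta> where t: "act (gidx n w k (int j)) z = s \<theta> z" using std_gl[OF X G a] by blast
  have t': "act (k, j, 0) z = s \<theta> z" using t gidx_norm[OF n jl(1)] by simp
  have v0: "valid_idx n (0, 0, l)" "valid_idx n (k, j, 0)" using jl n by (auto simp: valid_idx_def)
  have "act (0, 0, l) (act (k, j, 0) z) = s (\<gamma> ^ (l * j)) (act (k, j, l) z)"
    using mult[OF v0] by (simp add: mono_mult_00l jl hact_bsingle gnz)
  then have "s (\<gamma> ^ (l * j)) (act (k, j, l) z) = s \<theta> (act (0, 0, l) z)"
    using t' act_scale[OF v0(1)] by simp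
  then have "s (1 / \<gamma> ^ (l * j)) (s (\<gamma> ^ (l * j)) (act (k, j, l) z)) = s (1 / \<gamma> ^ (l * j)) (s \<theta> (act (0, 0, l) z))"
    by simp
  then have "act (k, j, l) z = s (\<theta> / \<gamma> ^ (l * j)) (act (0, 0, l) z)" using gnz by simp
  then show ?thesis by blast
qed

lemma std_eig:
  assumes G: "act (gidx n w 0 1) z = s \<beta> z" and n1: "1 < n" and l: "l < n"
  shows "act (0, 1, 0) (act (0, 0, l) z) = s (\<beta> / \<gamma> ^ l) (act (0, 0, l) z)"
proof -
  have g: "gidx n w 0 1 = (0, 1, 0)" using n1 by (simp add: gidx_def)
  have v0: "valid_idx n (0, 0, l)" "valid_idx n (0, 1, 0)" using l n1 by (auto simp: valid_idx_def)
  have e1: "act (0, 1, 0) (act (0, 0, l) z) = act (0, 1, l) z"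
    using mult[OF v0(2) v0(1)] l n1 by (simp add: mono_mult_def Let_def hact_bsingle)
  have "act (0, 0, l) (act (0, 1, 0) z) = s (\<gamma> ^ l) (act (0, 1, l) z)"
    using mult[OF v0] l n1 by (simp add: mono_mult_def Let_def hact_bsingle gnz)
  then have "s (\<gamma> ^ l) (act (0, 1, l) z) = s \<beta> (act (0, 0, l) z)"
    using G g act_scale[OF v0(1)] by simp
  then have "s (1 / \<gamma> ^ l) (s (\<gamma> ^ l) (act (0, 1, l) z)) = s (1 / \<gamma> ^ l) (s \<beta> (act (0, 0, l) z))" by simp
  then show ?thesis using e1 gnz by simp
qed

lemma opit_lin:
  assumes L: "Vector_Spaces.linear s s Gf"
  shows "Vector_Spaces.linear s s (opit Gf s \<beta> \<gamma> m)"
proof (induction m)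
  case 0
  then show ?case using vs by (simp add: Vector_Spaces.linear_iff)
next
  case (Suc m)
  then show ?case using vs L
    by (simp add: Vector_Spaces.linear_iff lin_add[OF L] scale_right_distrib scale_right_diff_distrib
        scale_left_commute[of _ "\<beta> / \<gamma> ^ Suc m"])
qed

lemma opit_eig:
  assumes L: "Vector_Spaces.linear s s Gf" and e: "Gf y = s \<mu> y"
  shows "opit Gf s \<beta> \<gamma> m y = s (\<Prod>i<m. (\<mu> - \<beta> / \<gamma> ^ Suc i)) y"
proof (induction m)
  case 0 then show ?case by simp
next
  case (Suc m)
  define P where "P = (\<Prod>i<m. (\<mu> - \<beta> / \<gamma> ^ Suc i))"
  have "opit Gf s \<beta> \<gamma> (Suc m) y = Gf (s P y) - s (\<beta> / \<gamma> ^ Suc m) (s P y)"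
    using Suc by (simp add: P_def)
  also have "\<dots> = s (P * \<mu>) y - s ((\<beta> / \<gamma> ^ Suc m) * P) y"
    using lin_scale[OF L] e by simp
  also have "\<dots> = s (P * (\<mu> - \<beta> / \<gamma> ^ Suc m)) y"
    by (simp add: algebra_simps scale_left_diff_distrib)
  finally show ?case by (simp add: P_def)
qed

lemma no_pure:
  assumes X: "act (gidx n w 1 0) z = s \<alpha> z" and G: "act (gidx n w 0 1) z = s \<beta> z"
    and a: "\<alpha> \<noteq> 0" and b: "\<beta> \<noteq> 0"
    and prim: "\<And>m. 0 < m \<Longrightarrow> m < n \<Longrightarrow> \<gamma> ^ m \<noteq> 1"
    and Gy: "act (gidx n w 0 1) y = s \<beta> y"
    and y: "y \<in> span {act p z | p. valid_idx n p}"
  shows "\<exists>c. y = s c z"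
proof -
  define Y where "Y l = act (0, 0, l) z" for l
  define T where "T = {(\<Sum>l<n. s (c l) (Y l)) | c. True}"
  have T0: "0 \<in> T" unfolding T_def by (auto intro!: exI[of _ "\<lambda>_. 0"])
  have Tadd: "x + x' \<in> T" if xT: "x \<in> T" "x' \<in> T" for x x'
  proof -
    obtain c d where "x = (\<Sum>l<n. s (c l) (Y l))" "x' = (\<Sum>l<n. s (d l) (Y l))"
      using xT unfolding T_def by blast
    then have "x + x' = (\<Sum>l<n. s (c l + d l) (Y l))"
      by (simp add: scale_left_distrib sum.distrib)
    then show ?thesis unfolding T_def by (auto intro!: exI[of _ "\<lambda>l. c l + d l"])
  qed
  have Tscale: "s e x \<in> T" if xT: "x \<in> T" for x e
  proof -
    obtain c where "x = (\<Sum>l<n. s (c l) (Y l))"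
      using xT unfolding T_def by blast
    then have "s e x = (\<Sum>l<n. s (e * c l) (Y l))"
      by (simp add: scale_sum_right)
    then show ?thesis unfolding T_def by (auto intro!: exI[of _ "\<lambda>l. e * c l"])
  qed
  have sub: "subspace T" unfolding subspace_def using T0 Tadd Tscale by blast
  have Tgen: "act p z \<in> T" if vp: "valid_idx n p" for p
  proof -
    obtain k j l where p: "p = (k, j, l)" by (cases p) auto
    have l: "l < n" using vp by (simp add: p valid_idx_def)
    obtain c where c: "act p z = s c (Y l)" using std_gen[OF X G a, of k j l] vp by (auto simp: p Y_def)
    have "(\<Sum>l'<n. s (if l' = l then c else 0) (Y l')) = (\<Sum>l'<n. if l' = l then s c (Y l') else 0)"
      by (rule sum.cong) auto
    also have "\<dots> = s c (Y l)" using l by simp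
    finally show ?thesis unfolding T_def c by (auto intro!: exI[of _ "\<lambda>l'. if l' = l then c else 0"])
  qed
  have "span {act p z | p. valid_idx n p} \<subseteq> T"
    by (rule span_minimal) (use Tgen sub in auto)
  with y obtain c where yc: "y = (\<Sum>l<n. s (c l) (Y l))" unfolding T_def by blast
  have Y0: "Y 0 = z" by (simp add: Y_def one)
  show ?thesis
  proof (cases "n = 1")
    case True
    then have "y = s (c 0) z" using yc Y0 by simp
    then show ?thesis by blast
  next
    case False
    then have n1: "1 < n" using n by simp
    have g01: "gidx n w 0 1 = (0, 1, 0)" using n1 by (simp add: gidx_def)
    have v010: "valid_idx n (0, 1, 0)" using n1 by (simp add: valid_idx_def)
    define Gf where "Gf = act (0, 1, 0)"
    have LG: "Vector_Spaces.linear s s Gf" unfolding Gf_def by (rule lin[OF v010])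
    define Op where "Op = opit Gf s \<beta> \<gamma> (n - 1)"
    have LO: "Vector_Spaces.linear s s Op" unfolding Op_def by (rule opit_lin[OF LG])
    define P where "P l = (\<Prod>i<n - 1. (\<beta> / \<gamma> ^ l - \<beta> / \<gamma> ^ Suc i))" for l
    have OY: "Op (Y l) = s (P l) (Y l)" if "l < n" for l
      unfolding Op_def P_def
      by (rule opit_eig[OF LG]) (use std_eig[OF G n1 that] in \<open>simp add: Gf_def Y_def\<close>)
    have Oy: "Op y = s (P 0) y"
      unfolding Op_def P_def
      by (rule opit_eig[OF LG]) (use Gy in \<open>simp add: Gf_def g01\<close>)
    have Pl: "P l = 0" if "0 < l" "l < n" for l
    proof -
      have "l - 1 \<in> {..<n - 1}" "\<beta> / \<gamma> ^ l - \<beta> / \<gamma> ^ Suc (l - 1) = 0" using that by auto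
      then show ?thesis unfolding P_def by (meson finite_lessThan prod_zero_iff)
    qed
    have P0: "P 0 \<noteq> 0"
    proof -
      have "\<beta> / \<gamma> ^ 0 - \<beta> / \<gamma> ^ Suc i \<noteq> 0" if "i < n - 1" for i
      proof
        assume "\<beta> / \<gamma> ^ 0 - \<beta> / \<gamma> ^ Suc i = 0"
        then have "\<beta> * \<gamma> ^ Suc i = \<beta>" using gnz by (simp add: field_simps)
        then have "\<gamma> ^ Suc i = 1" using b by simp
        moreover have "Suc i < n" using that by linarith
        ultimately show False using prim[of "Suc i"] by simp
      qed
      then show ?thesis unfolding P_def by simp
    qed
    have "Op y = (\<Sum>l<n. s (c l) (Op (Y l)))"
      unfolding yc by (simp add: lin_sum[OF LO] lin_scale[OF LO])
    also have "\<dots> = (\<Sum>l<n. if l = 0 then s (c 0 * P 0) z else 0)"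
      by (rule sum.cong) (auto simp: OY Pl Y0)
    also have "\<dots> = s (c 0 * P 0) z" using n by simp
    finally have "s (P 0) y = s (c 0 * P 0) z" using Oy by simp
    then have "s (1 / P 0) (s (P 0) y) = s (1 / P 0) (s (c 0 * P 0) z)" by simp
    then have "y = s (c 0) z" using P0 by simp
    then show ?thesis by blast
  qed
qed

end

definition pscale :: "('k::field \<Rightarrow> 'v::ab_group_add \<Rightarrow> 'v) \<Rightarrow> ('k \<Rightarrow> 'u::ab_group_add \<Rightarrow> 'u) \<Rightarrow> 'k \<Rightarrow> 'v \<times> 'u \<Rightarrow> 'v \<times> 'u" where
  "pscale sV sW c x = (sV c (fst x), sW c (snd x))"
definition pact :: "(idx \<Rightarrow> 'v \<Rightarrow> 'v) \<Rightarrow> (idx \<Rightarrow> 'u \<Rightarrow> 'u) \<Rightarrow> idx \<Rightarrow> 'v \<times> 'u \<Rightarrow> 'v \<times> 'u" where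
  "pact aV aW p x = (aV p (fst x), aW p (snd x))"

lemma sum_pair: "(sum F A, sum G A) = (\<Sum>x\<in>A. (F x, G x))"
  by (simp add: prod_eq_iff fst_sum snd_sum)

lemma vs_prod: "vector_space sV \<Longrightarrow> vector_space sW \<Longrightarrow> vector_space (pscale sV sW)"
  unfolding vector_space_def pscale_def by (auto simp: prod_eq_iff)

lemma lin_prod: "Vector_Spaces.linear sV sV f \<Longrightarrow> Vector_Spaces.linear sW sW g \<Longrightarrow>
    Vector_Spaces.linear (pscale sV sW) (pscale sV sW) (\<lambda>x. (f (fst x), g (snd x)))"
  by (auto simp: Vector_Spaces.linear_iff pscale_def vs_prod)

lemma hact_prod: "hact (pscale sV sW) (pact aV aW) a x = (hact sV aV a (fst x), hact sW aW a (snd x))"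
  by (simp add: hact_def pscale_def pact_def sum_pair)

lemma lin_pact: "Vector_Spaces.linear sV sV (aV p) \<Longrightarrow> Vector_Spaces.linear sW sW (aW p) \<Longrightarrow>
    Vector_Spaces.linear (pscale sV sW) (pscale sV sW) (pact aV aW p)"
  using lin_prod[of sV "aV p" sW "aW p"] by (simp add: pact_def[abs_def])

lemma hm_prod: "hm n w \<gamma> sV aV \<Longrightarrow> hm n w \<gamma> sW aW \<Longrightarrow> hm n w \<gamma> (pscale sV sW) (pact aV aW)"
  unfolding hm_def
  by (auto simp: vs_prod hact_prod pact_def lin_pact)

lemma YD_hm: "0 < n \<Longrightarrow> \<gamma> \<noteq> 0 \<Longrightarrow> is_YD n w \<gamma> s act co \<Longrightarrow> hm n w \<gamma> s act"
  unfolding is_YD_def hm_def by auto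

lemma sum_single: "sum f {x} = f x" by simp

lemma hgood_valid:
  assumes "0 < n" "valid_idx n p" "(a, b) \<in> fsupp (hDelta n w \<gamma> p)"
  shows "valid_idx n a \<and> valid_idx n b"
  using hDelta_good[OF assms(1,2), of w \<gamma>] assms(3) unfolding good_def fsupp_def by blast

lemma backward:
  fixes \<gamma> :: "'k::field"
    and sV :: "'k \<Rightarrow> 'v::ab_group_add \<Rightarrow> 'v" and actV :: "idx \<Rightarrow> 'v \<Rightarrow> 'v" and coV :: "'v \<Rightarrow> idx \<Rightarrow> 'v"
    and sW :: "'k \<Rightarrow> 'u::ab_group_add \<Rightarrow> 'u" and actW :: "idx \<Rightarrow> 'u \<Rightarrow> 'u" and coW :: "'u \<Rightarrow> idx \<Rightarrow> 'u"
  assumes n: "0 < n" and prim: "primitive_root n \<gamma>"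
    and YV: "is_YD n w \<gamma> sV actV coV" and SV: "YD_simple n sV actV coV"
    and YW: "is_YD n w \<gamma> sW actW coW" and SW: "YD_simple n sW actW coW"
    and stV: "standard_elem n w sV actV coV \<alpha> \<beta> r i v"
    and stW: "standard_elem n w sW actW coW \<alpha> \<beta> r i u"
  shows "YD_iso n sV actV coV sW actW coW"
proof -
  have gnz: "\<gamma> \<noteq> 0" using prim n unfolding primitive_root_def by (auto simp: power_0_left)
  have primm: "\<gamma> ^ m \<noteq> 1" if "0 < m" "m < n" for m using prim that unfolding primitive_root_def by blast
  have hV: "hm n w \<gamma> sV actV" by (rule YD_hm[OF n gnz YV])
  have hW: "hm n w \<gamma> sW actW" by (rule YD_hm[OF n gnz YW])
  define ps where "ps = pscale sV sW"
  define pa where "pa = pact actV actW"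
  define z where "z = (v, u)"
  have hP: "hm n w \<gamma> ps pa" unfolding ps_def pa_def by (rule hm_prod[OF hV hW])
  interpret V: hm n w \<gamma> sV actV by (rule hV)
  interpret W: hm n w \<gamma> sW actW by (rule hW)
  interpret P: hm n w \<gamma> ps pa by (rule hP)
  define h where "h = gidx n w r i"
  have v0: "v \<noteq> 0" and a: "\<alpha> \<noteq> 0" and b: "\<beta> \<noteq> 0" and cV: "coV v = bsingle h v"
    using stV by (auto simp: standard_elem_def h_def)
  have u0: "u \<noteq> 0" and cW: "coW u = bsingle h u"
    using stW by (auto simp: standard_elem_def h_def)
  have XV: "actV (gidx n w 1 0) v = sV \<alpha> v" and GV: "actV (gidx n w 0 1) v = sV \<beta> v"
    using stV by (auto simp: standard_elem_def hx_def hg_def hgl_def V.hact_bsingle)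
  have XW: "actW (gidx n w 1 0) u = sW \<alpha> u" and GW: "actW (gidx n w 0 1) u = sW \<beta> u"
    using stW by (auto simp: standard_elem_def hx_def hg_def hgl_def W.hact_bsingle)
  have XP: "pa (gidx n w 1 0) z = ps \<alpha> z" and GP: "pa (gidx n w 0 1) z = ps \<beta> z"
    using XV GV XW GW by (simp_all add: pa_def ps_def pact_def pscale_def z_def)
  define Gs where "Gs = {pa p z | p. valid_idx n p}"
  define S where "S = P.span Gs"
  have Ssub: "P.subspace S" unfolding S_def by (rule P.subspace_span)
  have zS: "z \<in> S"
  proof -
    have "pa (0, 0, 0) z \<in> Gs" unfolding Gs_def using n by (auto simp: valid_idx_def)
    then show ?thesis unfolding S_def using P.one by (metis P.span_base)
  qed
  have Sact: "pa q x \<in> S" if q: "valid_idx n q" and x: "x \<in> S" for q x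
  proof -
    have "pa q g \<in> S" if g: "g \<in> Gs" for g
    proof -
      obtain p where p: "valid_idx n p" "g = pa p z" using g unfolding Gs_def by blast
      have "pa q g = hact ps pa (mono_mult n w \<gamma> q p) z" using P.mult[OF q p(1)] p(2) by simp
      also have "\<dots> \<in> S" unfolding hact_def S_def
      proof (rule P.span_sum, rule P.span_scale, rule P.span_base)
        fix t assume "t \<in> fsupp (mono_mult n w \<gamma> q p)"
        then have "valid_idx n t" using mono_mult_valid[OF q p(1)] unfolding fsupp_def by blast
        then show "pa t z \<in> Gs" unfolding Gs_def by blast
      qed
      finally show ?thesis .
    qed
    then show ?thesis using span_closed_lin[OF P.vs P.lin[OF q]] x unfolding S_def by blast
  qed
  define pc where "pc t x = (coV (fst x) t, coW (snd x) t)" for t x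
  have linco1: "Vector_Spaces.linear sV sV (\<lambda>x. coV x t)" for t
    using YV unfolding is_YD_def by blast
  have linco2: "Vector_Spaces.linear sW sW (\<lambda>x. coW x t)" for t
    using YW unfolding is_YD_def by blast
  have Lpc: "Vector_Spaces.linear ps ps (pc t)" for t
    unfolding ps_def pc_def[abs_def] by (rule lin_prod[OF linco1 linco2])
  define K where "K p t a b a1 a2 = hDelta n w \<gamma> p (a, b) * hDelta n w \<gamma> a (a1, a2) *
     hmult n w \<gamma> (hmult n w \<gamma> (hbasis a1) (hbasis h)) (hS n w \<gamma> b) t" for p t a b a1 a2
  have fV: "fsupp (coV v) = {h}" unfolding cV by (rule fsupp_bsingle[OF v0])
  have fW: "fsupp (coW u) = {h}" unfolding cW by (rule fsupp_bsingle[OF u0])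
  have rawV: "\<forall>p v t. valid_idx n p \<longrightarrow> coV (actV p v) t =
          (\<Sum>(a, b)\<in>fsupp (hDelta n w \<gamma> p). \<Sum>(a1, a2)\<in>fsupp (hDelta n w \<gamma> a).
             \<Sum>q\<in>fsupp (coV v).
               sV (hDelta n w \<gamma> p (a, b) * hDelta n w \<gamma> a (a1, a2) *
                      hmult n w \<gamma> (hmult n w \<gamma> (hbasis a1) (hbasis q)) (hS n w \<gamma> b) t)
                     (actV a2 (coV v q)))"
    using YV unfolding is_YD_def by (elim conjE) assumption
  have cVh: "coV v h = v" by (simp add: cV bsingle_def)
  have ydV: "coV (actV p v) t = (\<Sum>(a, b)\<in>fsupp (hDelta n w \<gamma> p). \<Sum>(a1, a2)\<in>fsupp (hDelta n w \<gamma> a).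
       sV (K p t a b a1 a2) (actV a2 v))" if vp: "valid_idx n p" for p t
  proof -
    have "coV (actV p v) t =
          (\<Sum>(a, b)\<in>fsupp (hDelta n w \<gamma> p). \<Sum>(a1, a2)\<in>fsupp (hDelta n w \<gamma> a).
             \<Sum>q\<in>fsupp (coV v).
               sV (hDelta n w \<gamma> p (a, b) * hDelta n w \<gamma> a (a1, a2) *
                      hmult n w \<gamma> (hmult n w \<gamma> (hbasis a1) (hbasis q)) (hS n w \<gamma> b) t)
                     (actV a2 (coV v q)))"
      using rawV vp by blast
    then show ?thesis unfolding fV K_def by (simp only: sum_single cVh)
  qed
  have rawW: "\<forall>p u t. valid_idx n p \<longrightarrow> coW (actW p u) t =
          (\<Sum>(a, b)\<in>fsupp (hDelta n w \<gamma> p). \<Sum>(a1, a2)\<in>fsupp (hDelta n w \<gamma> a).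
             \<Sum>q\<in>fsupp (coW u).
               sW (hDelta n w \<gamma> p (a, b) * hDelta n w \<gamma> a (a1, a2) *
                      hmult n w \<gamma> (hmult n w \<gamma> (hbasis a1) (hbasis q)) (hS n w \<gamma> b) t)
                     (actW a2 (coW u q)))"
    using YW unfolding is_YD_def by (elim conjE) assumption
  have cWh: "coW u h = u" by (simp add: cW bsingle_def)
  have ydW: "coW (actW p u) t = (\<Sum>(a, b)\<in>fsupp (hDelta n w \<gamma> p). \<Sum>(a1, a2)\<in>fsupp (hDelta n w \<gamma> a).
       sW (K p t a b a1 a2) (actW a2 u))" if vp: "valid_idx n p" for p t
  proof -
    have "coW (actW p u) t =
          (\<Sum>(a, b)\<in>fsupp (hDelta n w \<gamma> p). \<Sum>(a1, a2)\<in>fsupp (hDelta n w \<gamma> a).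
             \<Sum>q\<in>fsupp (coW u).
               sW (hDelta n w \<gamma> p (a, b) * hDelta n w \<gamma> a (a1, a2) *
                      hmult n w \<gamma> (hmult n w \<gamma> (hbasis a1) (hbasis q)) (hS n w \<gamma> b) t)
                     (actW a2 (coW u q)))"
      using rawW vp by blast
    then show ?thesis unfolding fW K_def by (simp only: sum_single cWh)
  qed
  have Sco: "pc t x \<in> S" if x: "x \<in> S" for t x
  proof -
    have "pc t g \<in> S" if g: "g \<in> Gs" for g
    proof -
      obtain p where p: "valid_idx n p" "g = pa p z" using g unfolding Gs_def by blast
      have "pc t g = (\<Sum>(a, b)\<in>fsupp (hDelta n w \<gamma> p). \<Sum>(a1, a2)\<in>fsupp (hDelta n w \<gamma> a).
          ps (K p t a b a1 a2) (pa a2 z))"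
        using ydV[OF p(1)] ydW[OF p(1)] p(2)
        by (simp add: pc_def pa_def pact_def z_def prod_eq_iff fst_sum snd_sum split_beta ps_def pscale_def)
      also have "\<dots> \<in> S" unfolding S_def
      proof (rule P.span_sum)
        fix x assume x: "x \<in> fsupp (hDelta n w \<gamma> p)"
        obtain a b where ab: "x = (a, b)" by (cases x) auto
        have va: "valid_idx n a" using hgood_valid[OF n p(1)] x ab by blast
        show "(case x of (a, b) \<Rightarrow> \<Sum>(a1, a2)\<in>fsupp (hDelta n w \<gamma> a). ps (K p t a b a1 a2) (pa a2 z)) \<in> P.span Gs"
          unfolding ab prod.case
        proof (rule P.span_sum)
          fix y assume y: "y \<in> fsupp (hDelta n w \<gamma> a)"
          obtain a1 a2 where aa: "y = (a1, a2)" by (cases y) auto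
          have va2: "valid_idx n a2" using hgood_valid[OF n va] y aa by blast
          show "(case y of (a1, a2) \<Rightarrow> ps (K p t a b a1 a2) (pa a2 z)) \<in> P.span Gs"
            unfolding aa prod.case by (rule P.span_scale, rule P.span_base) (use va2 Gs_def in blast)
        qed
      qed
      finally show ?thesis .
    qed
    then show ?thesis using span_closed_lin[OF P.vs Lpc] x unfolding S_def by blast
  qed
  have Sadd: "x + y \<in> S" if "x \<in> S" "y \<in> S" for x y using P.span_add that unfolding S_def by blast
  have Sdiff: "x - y \<in> S" if "x \<in> S" "y \<in> S" for x y using P.span_diff that unfolding S_def by blast
  have Sscale: "ps c x \<in> S" if "x \<in> S" for c x using P.span_scale that unfolding S_def by blast
  have S0: "0 \<in> S" using P.span_zero unfolding S_def by blast
  have notv: "(v, 0) \<notin> S"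
  proof
    assume vS: "(v, 0) \<in> S"
    have "pa (gidx n w 0 1) (v, 0) = ps \<beta> (v, 0)"
      using GV W.act_zero[OF valid_gidx[OF n]] by (simp add: pa_def pact_def ps_def pscale_def)
    from P.no_pure[OF XP GP a b primm this] vS obtain c where c: "(v, 0) = ps c z"
      unfolding S_def Gs_def by blast
    then have "v = sV c v" "0 = sW c u" by (simp_all add: ps_def pscale_def z_def)
    then show False using v0 u0 by (metis V.scale_zero_left W.scale_eq_0_iff)
  qed
  have notu: "(0, u) \<notin> S"
  proof
    assume "(0, u) \<in> S"
    then have "z - (0, u) \<in> S" using zS Sdiff by blast
    then show False using notv by (simp add: z_def)
  qed
  have co0V: "coV 0 t = 0" for t using lin_zero[OF linco1] .
  have co0W: "coW 0 t = 0" for t using lin_zero[OF linco2] .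
  have U1: "fst ` S = UNIV"
  proof -
    have "YD_submodule n sV actV coV (fst ` S)"
      unfolding YD_submodule_def V.subspace_def
    proof (intro conjI ballI allI impI)
      show "0 \<in> fst ` S" using S0 by force
      show "x + y \<in> fst ` S" if xy: "x \<in> fst ` S" "y \<in> fst ` S" for x y
      proof -
        obtain a b where "a \<in> S" "b \<in> S" "x = fst a" "y = fst b" using xy by blast
        then show ?thesis using Sadd[of a b] by (metis fst_add image_eqI)
      qed
      show "sV c x \<in> fst ` S" if xa: "x \<in> fst ` S" for c x
      proof -
        obtain a where a: "a \<in> S" "x = fst a" using xa by blast
        have "sV c x = fst (ps c a)" using a by (simp add: ps_def pscale_def)
        then show ?thesis using Sscale[OF a(1)] by blast
      qed
      show "actV p x \<in> fst ` S" if xa: "valid_idx n p" "x \<in> fst ` S" for p x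
      proof -
        obtain a where a: "a \<in> S" "x = fst a" using xa by blast
        have "actV p x = fst (pa p a)" using a by (simp add: pa_def pact_def)
        then show ?thesis using Sact[OF xa(1) a(1)] by blast
      qed
      show "coV x t \<in> fst ` S" if xa: "x \<in> fst ` S" for x t
      proof -
        obtain a where a: "a \<in> S" "x = fst a" using xa by blast
        have "coV x t = fst (pc t a)" using a by (simp add: pc_def)
        then show ?thesis using Sco[OF a(1)] by blast
      qed
    qed
    moreover have "v \<in> fst ` S" using zS by (force simp: z_def)
    ultimately show ?thesis using SV v0 unfolding YD_simple_def by blast
  qed
  have U2: "snd ` S = UNIV"
  proof -
    have "YD_submodule n sW actW coW (snd ` S)"
      unfolding YD_submodule_def W.subspace_def
    proof (intro conjI ballI allI impI)
      show "0 \<in> snd ` S" using S0 by force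
      show "x + y \<in> snd ` S" if xy: "x \<in> snd ` S" "y \<in> snd ` S" for x y
      proof -
        obtain a b where "a \<in> S" "b \<in> S" "x = snd a" "y = snd b" using xy by blast
        then show ?thesis using Sadd[of a b] by (metis snd_add image_eqI)
      qed
      show "sW c x \<in> snd ` S" if xa: "x \<in> snd ` S" for c x
      proof -
        obtain a where a: "a \<in> S" "x = snd a" using xa by blast
        have "sW c x = snd (ps c a)" using a by (simp add: ps_def pscale_def)
        then show ?thesis using Sscale[OF a(1)] by blast
      qed
      show "actW p x \<in> snd ` S" if xa: "valid_idx n p" "x \<in> snd ` S" for p x
      proof -
        obtain a where a: "a \<in> S" "x = snd a" using xa by blast
        have "actW p x = snd (pa p a)" using a by (simp add: pa_def pact_def)
        then show ?thesis using Sact[OF xa(1) a(1)] by blast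
      qed
      show "coW x t \<in> snd ` S" if xa: "x \<in> snd ` S" for x t
      proof -
        obtain a where a: "a \<in> S" "x = snd a" using xa by blast
        have "coW x t = snd (pc t a)" using a by (simp add: pc_def)
        then show ?thesis using Sco[OF a(1)] by blast
      qed
    qed
    moreover have "u \<in> snd ` S" using zS by (force simp: z_def)
    ultimately show ?thesis using SW u0 unfolding YD_simple_def by blast
  qed
  have K2: "{y. (0, y) \<in> S} = {0}"
  proof -
    have "YD_submodule n sW actW coW {y. (0, y) \<in> S}"
      unfolding YD_submodule_def W.subspace_def
    proof (intro conjI ballI allI impI)
      show "0 \<in> {y. (0, y) \<in> S}" using S0 by (simp add: zero_prod_def)
      show "x + y \<in> {y. (0, y) \<in> S}" if "x \<in> {y. (0, y) \<in> S}" "y \<in> {y. (0, y) \<in> S}" for x y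
        using that Sadd[of "(0, x)" "(0, y)"] by simp
      show "sW c x \<in> {y. (0, y) \<in> S}" if "x \<in> {y. (0, y) \<in> S}" for c x
        using that Sscale[of "(0, x)" c] by (simp add: ps_def pscale_def)
      show "actW p x \<in> {y. (0, y) \<in> S}" if "valid_idx n p" "x \<in> {y. (0, y) \<in> S}" for p x
        using that Sact[of p "(0, x)"] V.act_zero by (simp add: pa_def pact_def)
      show "coW x t \<in> {y. (0, y) \<in> S}" if "x \<in> {y. (0, y) \<in> S}" for x t
        using that Sco[of "(0, x)" t] co0V by (simp add: pc_def)
    qed
    moreover have "u \<notin> {y. (0, y) \<in> S}" using notu by simp
    ultimately show ?thesis using SW unfolding YD_simple_def by blast
  qed
  have K1: "{x. (x, 0) \<in> S} = {0}"
  proof -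
    have "YD_submodule n sV actV coV {x. (x, 0) \<in> S}"
      unfolding YD_submodule_def V.subspace_def
    proof (intro conjI ballI allI impI)
      show "0 \<in> {x. (x, 0) \<in> S}" using S0 by (simp add: zero_prod_def)
      show "x + y \<in> {x. (x, 0) \<in> S}" if "x \<in> {x. (x, 0) \<in> S}" "y \<in> {x. (x, 0) \<in> S}" for x y
        using that Sadd[of "(x, 0)" "(y, 0)"] by simp
      show "sV c x \<in> {x. (x, 0) \<in> S}" if "x \<in> {x. (x, 0) \<in> S}" for c x
        using that Sscale[of "(x, 0)" c] by (simp add: ps_def pscale_def)
      show "actV p x \<in> {x. (x, 0) \<in> S}" if "valid_idx n p" "x \<in> {x. (x, 0) \<in> S}" for p x
        using that Sact[of p "(x, 0)"] W.act_zero by (simp add: pa_def pact_def)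
      show "coV x t \<in> {x. (x, 0) \<in> S}" if "x \<in> {x. (x, 0) \<in> S}" for x t
        using that Sco[of "(x, 0)" t] co0W by (simp add: pc_def)
    qed
    moreover have "v \<notin> {x. (x, 0) \<in> S}" using notv by simp
    ultimately show ?thesis using SV unfolding YD_simple_def by blast
  qed
  have uniq: "y = y'" if "(x, y) \<in> S" "(x, y') \<in> S" for x y y'
  proof -
    have "(x, y) - (x, y') \<in> S" using Sdiff that by blast
    then have "y - y' \<in> {y. (0, y) \<in> S}" by simp
    then show ?thesis using K2 by simp
  qed
  define f where "f x = (THE y. (x, y) \<in> S)" for x
  have fS: "(x, f x) \<in> S" for x
  proof -
    obtain y where y: "(x, y) \<in> S" using U1 by (metis UNIV_I imageE prod.collapse)
    show ?thesis unfolding f_def by (rule theI[of _ y]) (use y uniq in auto)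
  qed
  have fI: "f x = y" if "(x, y) \<in> S" for x y using uniq[OF fS that] .
  have inj: "inj f"
  proof (rule injI)
    fix x x' assume "f x = f x'"
    then have "(x, f x) - (x', f x') \<in> S" using Sdiff fS by metis
    then have "x - x' \<in> {x. (x, 0) \<in> S}" using \<open>f x = f x'\<close> by simp
    then show "x = x'" using K1 by simp
  qed
  have surj: "surj f"
  proof (rule surjI)
    fix y
    obtain x where "(x, y) \<in> S" using U2 by (metis UNIV_I imageE prod.collapse)
    then show "f (SOME x. (x, y) \<in> S) = y" by (metis (mono_tags, lifting) fI someI)
  qed
  have lin: "Vector_Spaces.linear sV sW f"
    unfolding Vector_Spaces.linear_iff
  proof (intro conjI allI)
    show "vector_space sV" by (rule V.vs)
    show "vector_space sW" by (rule W.vs)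
    show "f (x + y) = f x + f y" for x y using Sadd[OF fS fS, of x y] fI by simp
    show "f (sV c x) = sW c (f x)" for c x using Sscale[OF fS, of c x] fI by (simp add: ps_def pscale_def)
  qed
  show ?thesis unfolding YD_iso_def
  proof (intro exI[of _ f] conjI allI impI)
    show "bij f" using inj surj by (rule bijI)
    show "Vector_Spaces.linear sV sW f" by (rule lin)
    show "f (actV p x) = actW p (f x)" if "valid_idx n p" for p x
      using Sact[OF that fS, of x] fI by (simp add: pa_def pact_def)
    show "f (coV x t) = coW (f x) t" for x t
      using Sco[OF fS, of t x] fI by (simp add: pc_def)
  qed
qed

lemma pev_le:
  fixes s :: "'k::field \<Rightarrow> 'v::ab_group_add \<Rightarrow> 'v"
  assumes vs: "vector_space s" and d: "degree p \<le> M"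
  shows "(\<Sum>i\<le>degree p. s (coeff p i) ((T^^i) x)) = (\<Sum>i\<le>M. s (coeff p i) ((T^^i) x))"
proof -
  interpret vector_space s by (rule vs)
  show ?thesis
    by (rule sum.mono_neutral_left) (use d in \<open>auto simp: coeff_eq_0\<close>)
qed

lemma pev_factor:
  fixes s :: "'k::field \<Rightarrow> 'v::ab_group_add \<Rightarrow> 'v"
  assumes vs: "vector_space s" and L: "Vector_Spaces.linear s s T"
  shows "(\<Sum>i\<le>degree ([:-z, 1:] * q). s (coeff ([:-z, 1:] * q) i) ((T^^i) x)) =
         T (\<Sum>i\<le>degree q. s (coeff q i) ((T^^i) x)) - s z (\<Sum>i\<le>degree q. s (coeff q i) ((T^^i) x))"
proof -
  interpret vector_space s by (rule vs)
  define d where "d = degree q"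
  have deg: "degree ([:-z, 1:] * q) \<le> Suc d" unfolding d_def
    by (rule order_trans[OF degree_mult_le]) simp
  have c: "coeff ([:-z, 1:] * q) i = (if i = 0 then 0 else coeff q (i - 1)) - z * coeff q i" for i
    by (cases i) simp_all
  have "(\<Sum>i\<le>degree ([:-z, 1:] * q). s (coeff ([:-z, 1:] * q) i) ((T^^i) x))
      = (\<Sum>i\<le>Suc d. s (coeff ([:-z, 1:] * q) i) ((T^^i) x))"
    by (rule pev_le[OF vs deg])
  also have "\<dots> = (\<Sum>i\<le>Suc d. s (if i = 0 then 0 else coeff q (i - 1)) ((T^^i) x))
      - (\<Sum>i\<le>Suc d. s (z * coeff q i) ((T^^i) x))"
    unfolding c by (simp add: scale_left_diff_distrib sum_subtractf)
  also have "(\<Sum>i\<le>Suc d. s (if i = 0 then 0 else coeff q (i - 1)) ((T^^i) x))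
      = (\<Sum>i\<le>d. T (s (coeff q i) ((T^^i) x)))"
    by (subst sum.atMost_Suc_shift) (simp add: lin_scale[OF L])
  also have "\<dots> = T (\<Sum>i\<le>d. s (coeff q i) ((T^^i) x))"
    by (simp add: lin_sum[OF L])
  also have "(\<Sum>i\<le>Suc d. s (z * coeff q i) ((T^^i) x)) = s z (\<Sum>i\<le>Suc d. s (coeff q i) ((T^^i) x))"
    by (simp only: scale_sum_right scale_scale)
  also have "(\<Sum>i\<le>Suc d. s (coeff q i) ((T^^i) x)) = (\<Sum>i\<le>d. s (coeff q i) ((T^^i) x))"
    unfolding d_def by (rule pev_le[OF vs, symmetric]) simp
  finally show ?thesis by (simp add: d_def)
qed

lemma eig_poly:
  fixes s :: "'k::field \<Rightarrow> 'v::ab_group_add \<Rightarrow> 'v"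
  assumes ac: "alg_closed TYPE('k)" and vs: "vector_space s"
    and L: "Vector_Spaces.linear s s T" and U: "module.subspace s U" and TU: "\<And>x. x \<in> U \<Longrightarrow> T x \<in> U"
  shows "p \<noteq> 0 \<Longrightarrow> x \<in> U \<Longrightarrow> x \<noteq> 0 \<Longrightarrow> (\<Sum>i\<le>degree p. s (coeff p i) ((T^^i) x)) = 0
    \<Longrightarrow> \<exists>y\<in>U. y \<noteq> 0 \<and> (\<exists>c. T y = s c y)"
proof (induction "degree p" arbitrary: p rule: less_induct)
  case less
  interpret vector_space s by (rule vs)
  have TiU: "(T^^i) y \<in> U" if "y \<in> U" for i y using that by (induction i) (auto intro: TU)
  have pevU: "(\<Sum>i\<le>degree q. s (coeff q i) ((T^^i) y)) \<in> U" if "y \<in> U" for q y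
    by (rule subspace_sum[OF U]) (use subspace_scale[OF U] TiU that in blast)
  show ?case
  proof (cases "degree p = 0")
    case True
    then obtain c where p: "p = [:c:]" by (metis degree_eq_zeroE)
    then have "c \<noteq> 0" using less.prems by simp
    moreover have "(\<Sum>i\<le>degree p. s (coeff p i) ((T^^i) x)) = s c x" using p by simp
    ultimately show ?thesis using less.prems by simp
  next
    case False
    then obtain z where "poly p z = 0" using ac unfolding alg_closed_def by blast
    then obtain q where pq: "p = [:-z, 1:] * q" using poly_eq_0_iff_dvd by (metis dvdE)
    have q0: "q \<noteq> 0" using less.prems pq by auto
    have "degree p = degree [:-z, 1:] + degree q" unfolding pq by (rule degree_mult_eq) (auto simp: q0)
    then have dq: "degree q < degree p" by simp
    define y where "y = (\<Sum>i\<le>degree q. s (coeff q i) ((T^^i) x))"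
    have "T y - s z y = 0" using pev_factor[OF vs L, of z q x] less.prems pq y_def by simp
    then have Ty: "T y = s z y" by simp
    show ?thesis
    proof (cases "y = 0")
      case True
      then show ?thesis using less.hyps[OF dq q0 less.prems(2,3)] y_def by simp
    next
      case False
      then show ?thesis using Ty pevU[OF less.prems(2)] y_def by blast
    qed
  qed
qed

lemma eigen_exists:
  fixes s :: "'k::field \<Rightarrow> 'v::ab_group_add \<Rightarrow> 'v"
  assumes ac: "alg_closed TYPE('k)" and vs: "vector_space s"
    and fin: "finite B" and sp: "module.span s B = UNIV"
    and L: "Vector_Spaces.linear s s T" and U: "module.subspace s U" and TU: "\<And>x. x \<in> U \<Longrightarrow> T x \<in> U"
    and nz: "u0 \<in> U" "u0 \<noteq> 0"
  shows "\<exists>y\<in>U. y \<noteq> 0 \<and> (\<exists>c. T y = s c y)"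
proof -
  interpret vector_space s by (rule vs)
  define N where "N = card B"
  define f where "f i = (T^^i) u0" for i
  have "\<exists>c. (\<exists>k\<le>N. c k \<noteq> 0) \<and> (\<Sum>k\<le>N. s (c k) (f k)) = 0"
  proof (cases "inj_on f {..N}")
    case True
    have "dependent (f ` {..N})"
    proof (rule ccontr)
      assume ind: "independent (f ` {..N})"
      have "card (f ` {..N}) \<le> card B" using independent_span_bound[OF fin ind] sp by auto
      moreover have "card (f ` {..N}) = Suc N" using True by (simp add: card_image)
      ultimately show False by (simp add: N_def)
    qed
    then obtain c where c: "\<exists>v\<in>f ` {..N}. c v \<noteq> 0" "(\<Sum>v\<in>f ` {..N}. s (c v) v) = 0"
      using dependent_finite[of "f ` {..N}"] by auto
    have "(\<Sum>k\<le>N. s (c (f k)) (f k)) = 0" using c(2) sum.reindex[OF True, of "\<lambda>v. s (c v) v"] by simp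
    moreover have "\<exists>k\<le>N. c (f k) \<noteq> 0" using c(1) by auto
    ultimately show ?thesis by (intro exI[of _ "\<lambda>k. c (f k)"]) auto
  next
    case False
    then obtain i j where ij: "i \<le> N" "j \<le> N" "i \<noteq> j" "f i = f j" unfolding inj_on_def by auto
    define c where "c k = (if k = i then 1 else 0) - (if k = j then 1 else (0::'k))" for k
    have e: "(\<Sum>k\<le>N. s (if k = m then 1 else 0) (f k)) = f m" if "m \<le> N" for m
    proof -
      have "(\<Sum>k\<le>N. s (if k = m then 1 else 0) (f k)) = (\<Sum>k\<le>N. if k = m then f k else 0)"
        by (rule sum.cong) auto
      then show ?thesis using that by simp
    qed
    have "(\<Sum>k\<le>N. s (c k) (f k)) = (\<Sum>k\<le>N. s (if k = i then 1 else 0) (f k)) - (\<Sum>k\<le>N. s (if k = j then 1 else 0) (f k))"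
      unfolding c_def by (simp add: scale_left_diff_distrib sum_subtractf)
    also have "\<dots> = 0" using e[OF ij(1)] e[OF ij(2)] ij(4) by simp
    finally show ?thesis using ij by (intro exI[of _ c]) (auto simp: c_def)
  qed
  then obtain c where c: "\<exists>k\<le>N. c k \<noteq> 0" "(\<Sum>k\<le>N. s (c k) (f k)) = 0" by blast
  define p where "p = (\<Sum>k\<le>N. monom (c k) k)"
  have cp: "coeff p i = (if i \<le> N then c i else 0)" for i unfolding p_def by (simp add: coeff_sum)
  have dp: "degree p \<le> N" by (rule degree_le) (simp add: cp)
  have p0: "p \<noteq> 0" using c(1) cp by (metis coeff_0)
  have "(\<Sum>i\<le>degree p. s (coeff p i) ((T^^i) u0)) = (\<Sum>i\<le>N. s (coeff p i) ((T^^i) u0))"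
    by (rule pev_le[OF vs dp])
  also have "\<dots> = 0" using c(2) by (simp add: cp f_def)
  finally show ?thesis using eig_poly[OF ac vs L U TU p0 nz] by blast
qed

lemma hact_bs1: assumes vs: "vector_space s" shows "hact s act (bsingle p 1) v = act p v"
proof -
  interpret vector_space s by (rule vs)
  show ?thesis unfolding hact_def fsupp_bsingle[OF one_neq_zero] by (simp add: bsingle_def)
qed

lemma gl_pres:
  fixes \<gamma> :: "'k::field" and s :: "'k \<Rightarrow> 'v::ab_group_add \<Rightarrow> 'v"
  assumes n: "0 < n" and Y: "is_YD n w \<gamma> s act co" and q: "jq < n" and hh: "jh < n"
    and x: "co x = bsingle (kh, jh, 0) x"
  shows "co (act (kq, jq, 0) x) = bsingle (kh, jh, 0) (act (kq, jq, 0) x)"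
proof -
  define q where "q = (kq, jq, (0::nat))"
  define h where "h = (kh, jh, (0::nat))"
  have vs: "vector_space s" using Y unfolding is_YD_def by blast
  interpret vector_space s by (rule vs)
  have vq: "valid_idx n q" using q n by (simp add: q_def valid_idx_def)
  have lq: "Vector_Spaces.linear s s (act q)" using Y vq unfolding is_YD_def by blast
  have linco: "Vector_Spaces.linear s s (\<lambda>x. co x t)" for t using Y unfolding is_YD_def by blast
  show ?thesis
  proof (cases "x = 0")
    case True
    then show ?thesis using lin_zero[OF lq] lin_zero[OF linco] by (auto simp: bsingle_def q_def)
  next
    case False
    have raw: "\<forall>p v t. valid_idx n p \<longrightarrow> co (act p v) t =
          (\<Sum>(a, b)\<in>fsupp (hDelta n w \<gamma> p). \<Sum>(a1, a2)\<in>fsupp (hDelta n w \<gamma> a).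
             \<Sum>q\<in>fsupp (co v).
               s (hDelta n w \<gamma> p (a, b) * hDelta n w \<gamma> a (a1, a2) *
                      hmult n w \<gamma> (hmult n w \<gamma> (hbasis a1) (hbasis q)) (hS n w \<gamma> b) t)
                     (act a2 (co v q)))"
      using Y unfolding is_YD_def by (elim conjE) assumption
    have fx: "fsupp (co x) = {h}" unfolding x h_def[symmetric] by (rule fsupp_bsingle[OF False])
    have cxh: "co x h = x" by (simp add: x h_def bsingle_def)
    have gq: "gidx n w kq (int jq) = q" using gidx_norm[OF n q] by (simp add: q_def)
    have gh: "gidx n w kh (int jh) = h" using gidx_norm[OF n hh] by (simp add: h_def)
    have dq: "hDelta n w \<gamma> q = bsingle (q, q) 1"
      using hDelta_gl[OF n q, of w \<gamma> kq] gidx_norm[OF n q, of w kq] by (simp add: tgl_def q_def)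
    have fdq: "fsupp (hDelta n w \<gamma> q) = {(q, q)}" unfolding dq by (rule fsupp_bsingle) simp
    have m: "hmult n w \<gamma> (hmult n w \<gamma> (hbasis q) (hbasis h)) (hS n w \<gamma> q) = bsingle h 1"
    proof -
      have b1: "hbasis q = hgl n w kq (int jq)" by (simp add: hbasis_def hgl_def gq)
      have b2: "hbasis h = hgl n w kh (int jh)" by (simp add: hbasis_def hgl_def gh)
      have b3: "hS n w \<gamma> q = hgl n w (- kq) (- int jq)" unfolding q_def by (rule hS_gl[OF n q])
      have "hmult n w \<gamma> (hmult n w \<gamma> (hbasis q) (hbasis h)) (hS n w \<gamma> q) =
          hmult n w \<gamma> (hmult n w \<gamma> (hgl n w kq (int jq)) (hgl n w kh (int jh))) (hgl n w (- kq) (- int jq))"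
        by (simp only: b1 b2 b3)
      also have "\<dots> = hgl n w kh (int jh)" by (simp add: hmult_hgl[OF n])
      finally show ?thesis by (simp add: hgl_def gh)
    qed
    have "co (act q x) t = s (bsingle h 1 t) (act q x)" for t
    proof -
      have "co (act q x) t = (\<Sum>(a, b)\<in>fsupp (hDelta n w \<gamma> q). \<Sum>(a1, a2)\<in>fsupp (hDelta n w \<gamma> a).
             \<Sum>q'\<in>fsupp (co x).
               s (hDelta n w \<gamma> q (a, b) * hDelta n w \<gamma> a (a1, a2) *
                      hmult n w \<gamma> (hmult n w \<gamma> (hbasis a1) (hbasis q')) (hS n w \<gamma> b) t)
                     (act a2 (co x q')))"
        using raw vq by blast
      also have "\<dots> = s (hmult n w \<gamma> (hmult n w \<gamma> (hbasis q) (hbasis h)) (hS n w \<gamma> q) t) (act q x)"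
        unfolding fx by (simp add: dq fsupp_bsingle) (simp add: bsingle_def cxh)
      finally show ?thesis unfolding m .
    qed
    then show ?thesis by (auto simp: q_def h_def bsingle_def)
  qed
qed

lemma gidx_form: "0 < n \<Longrightarrow> \<exists>k j. gidx n w r i = (k, j, 0) \<and> j < n"
  using valid_gidx[of n w r i] gidx_l[of n w r i] by (cases "gidx n w r i") (auto simp: valid_idx_def)

lemma exists_standard:
  fixes \<gamma> :: "'k::field" and s :: "'k \<Rightarrow> 'v::ab_group_add \<Rightarrow> 'v"
  assumes ac: "alg_closed TYPE('k)" and n: "0 < n" and gnz: "\<gamma> \<noteq> 0"
    and Y: "is_YD n w \<gamma> s act co" and fd: "fin_dim s" and nt: "(UNIV :: 'v set) \<noteq> {0}"
  shows "\<exists>\<alpha> \<beta> r i v. standard_elem n w s act co \<alpha> \<beta> r i v"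
proof -
  interpret hm n w \<gamma> s act by (rule YD_hm[OF n gnz Y])
  have finco: "finite (fsupp (co x))" for x using Y unfolding is_YD_def by blast
  have valco: "valid_idx n t" if "t \<in> fsupp (co x)" for x t using Y that unfolding is_YD_def by blast
  have counit: "(\<Sum>t\<in>fsupp (co x). s (heps t) (co x t)) = x" for x using Y unfolding is_YD_def by blast
  have coass: "(\<Sum>p\<in>fsupp (co x). s (hDelta n w \<gamma> p (a, b)) (co x p)) = co (co x a) b" for x a b
    using Y unfolding is_YD_def by blast
  have linco: "Vector_Spaces.linear s s (\<lambda>x. co x t)" for t using Y unfolding is_YD_def by blast
  have ne: "fsupp (co x) \<noteq> {}" if "x \<noteq> 0" for x using counit[of x] that by auto
  obtain v0 where v0: "v0 \<noteq> (0::'v)" using nt by blast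
  define F where "F = fsupp (co v0)"
  define L where "L = Max ((\<lambda>t. snd (snd t)) ` F)"
  have "L \<in> (\<lambda>t. snd (snd t)) ` F" unfolding L_def
    by (rule Max_in) (use finco ne[OF v0] in \<open>auto simp: F_def\<close>)
  then obtain s0 where s0: "s0 \<in> F" "snd (snd s0) = L" by force
  define u1 where "u1 = co v0 s0"
  have u1: "u1 \<noteq> 0" using s0(1) unfolding u1_def F_def fsupp_def by simp
  have l0: "snd (snd t) = 0" if t: "t \<in> fsupp (co u1)" for t
  proof -
    have "(\<Sum>p\<in>F. s (hDelta n w \<gamma> p (s0, t)) (co v0 p)) \<noteq> 0"
      using t coass[where x=v0 and a=s0 and b=t] unfolding u1_def F_def fsupp_def by simp
    then obtain p where p: "p \<in> F" "s (hDelta n w \<gamma> p (s0, t)) (co v0 p) \<noteq> 0"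
      by (meson sum.not_neutral_contains_not_neutral)
    then have hd: "hDelta n w \<gamma> p (s0, t) \<noteq> 0" by auto
    have vp: "valid_idx n p" using valco p(1) F_def by blast
    have "snd (snd s0) + snd (snd t) = snd (snd p)"
      using hDelta_good[OF n vp, of w \<gamma>] hd unfolding good_def by blast
    moreover have "snd (snd p) \<le> L" unfolding L_def using p(1) finco F_def by (auto intro: Max_ge)
    ultimately show ?thesis using s0(2) by simp
  qed
  obtain h where h: "h \<in> fsupp (co u1)" using ne[OF u1] by blast
  obtain kh jh where hk: "h = (kh, jh, 0)" "jh < n"
    using l0[OF h] valco[OF h] by (cases h) (auto simp: valid_idx_def)
  define u2 where "u2 = co u1 h"
  have u2: "u2 \<noteq> 0" using h unfolding u2_def fsupp_def by simp
  have cu2: "co u2 = bsingle h u2"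
  proof
    fix t
    have "co u2 t = (\<Sum>p\<in>fsupp (co u1). s (hDelta n w \<gamma> p (h, t)) (co u1 p))"
      unfolding u2_def by (rule coass[symmetric])
    also have "\<dots> = (\<Sum>p\<in>fsupp (co u1). if p = h then bsingle h u2 t else 0)"
    proof (rule sum.cong)
      fix p assume p: "p \<in> fsupp (co u1)"
      obtain kp jp where pk: "p = (kp, jp, 0)" "jp < n"
        using l0[OF p] valco[OF p] by (cases p) (auto simp: valid_idx_def)
      have "hDelta n w \<gamma> p = bsingle (p, p) 1"
        using hDelta_gl[OF n pk(2), of w \<gamma> kp] gidx_norm[OF n pk(2), of w kp] by (simp add: tgl_def pk)
      then show "s (hDelta n w \<gamma> p (h, t)) (co u1 p) = (if p = h then bsingle h u2 t else 0)"
        by (auto simp: bsingle_def u2_def)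
    qed simp
    also have "\<dots> = bsingle h u2 t" using h finco by simp
    finally show "co u2 t = bsingle h u2 t" .
  qed
  define E where "E = {x. co x = bsingle h x}"
  have Esub: "subspace E"
    unfolding subspace_def E_def
    using lin_zero[OF linco] lin_add[OF linco] lin_scale[OF linco]
    by (auto simp: bsingle_def fun_eq_iff)
  have u2E: "u2 \<in> E" using cu2 by (simp add: E_def)
  define X where "X = gidx n w 1 0"
  define G where "G = gidx n w 0 1"
  obtain kx jx where X: "X = (kx, jx, 0)" "jx < n" using gidx_form[OF n] X_def by blast
  obtain kg jg where G: "G = (kg, jg, 0)" "jg < n" using gidx_form[OF n] G_def by blast
  have vX: "valid_idx n X" and vG: "valid_idx n G" by (simp_all add: X_def G_def valid_gidx[OF n])
  have presX: "act X x \<in> E" if "x \<in> E" for x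
    using gl_pres[OF n Y X(2) hk(2), where kq=kx and kh=kh] that unfolding E_def X(1) hk(1) by blast
  have presG: "act G x \<in> E" if "x \<in> E" for x
    using gl_pres[OF n Y G(2) hk(2), where kq=kg and kh=kh] that unfolding E_def G(1) hk(1) by blast
  obtain B where B: "finite B" "span B = UNIV" using fd unfolding fin_dim_def by blast
  obtain y1 \<alpha> where y1: "y1 \<in> E" "y1 \<noteq> 0" "act X y1 = s \<alpha> y1"
    using eigen_exists[OF ac vs B lin[OF vX] Esub presX u2E u2] by blast
  define E1 where "E1 = {x \<in> E. act X x = s \<alpha> x}"
  have E1sub: "subspace E1"
    unfolding subspace_def E1_def
    using subspace_0[OF Esub] subspace_add[OF Esub] subspace_scale[OF Esub]
      act_zero[OF vX] act_add[OF vX] act_scale[OF vX]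
    by (auto simp: scale_right_distrib scale_left_commute)
  have XG: "act X (act G x) = act G (act X x)" for x
    unfolding X_def G_def by (simp add: act_gl)
  have presE1: "act G x \<in> E1" if "x \<in> E1" for x
    using that presG XG act_scale[OF vG] unfolding E1_def by auto
  have y1E1: "y1 \<in> E1" using y1 by (simp add: E1_def)
  obtain y2 \<beta> where y2: "y2 \<in> E1" "y2 \<noteq> 0" "act G y2 = s \<beta> y2"
    using eigen_exists[OF ac vs B lin[OF vG] E1sub presE1 y1E1 y1(2)] by blast
  have a0: "\<alpha> \<noteq> 0"
  proof
    assume "\<alpha> = 0"
    then have "act (gidx n w (-1) 0) (act X y1) = 0" using y1(3) act_zero[OF valid_gidx[OF n]] by simp
    then show False using y1(2) act_gl[of "-1" 0 1 0 y1] act_gidx00 unfolding X_def by simp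
  qed
  have b0: "\<beta> \<noteq> 0"
  proof
    assume "\<beta> = 0"
    then have "act (gidx n w 0 (-1)) (act G y2) = 0" using y2(3) act_zero[OF valid_gidx[OF n]] by simp
    then show False using y2(2) act_gl[of 0 "-1" 0 1 y2] act_gidx00 unfolding G_def by simp
  qed
  have "standard_elem n w s act co \<alpha> \<beta> kh (int jh) y2"
    unfolding standard_elem_def
  proof (intro conjI)
    show "y2 \<noteq> 0" "\<alpha> \<noteq> 0" "\<beta> \<noteq> 0" by (fact y2(2) a0 b0)+
    show "hact s act (hx n w) y2 = s \<alpha> y2"
      using y2(1) unfolding hx_def hgl_def hact_bs1[OF vs] E1_def X_def by simp
    show "hact s act (hg n w) y2 = s \<beta> y2"
      using y2(3) unfolding hg_def hgl_def hact_bs1[OF vs] G_def by simp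
    show "co y2 = bsingle (gidx n w kh (int jh)) y2"
      using y2(1) gidx_norm[OF n hk(2)] unfolding E1_def E_def hk(1) by simp
  qed
  then show ?thesis by blast
qed

lemma transport:
  fixes \<gamma> :: "'k::field"
    and sV :: "'k \<Rightarrow> 'v::ab_group_add \<Rightarrow> 'v" and actV :: "idx \<Rightarrow> 'v \<Rightarrow> 'v" and coV :: "'v \<Rightarrow> idx \<Rightarrow> 'v"
    and sW :: "'k \<Rightarrow> 'u::ab_group_add \<Rightarrow> 'u" and actW :: "idx \<Rightarrow> 'u \<Rightarrow> 'u" and coW :: "'u \<Rightarrow> idx \<Rightarrow> 'u"
  assumes n: "0 < n" and YV: "is_YD n w \<gamma> sV actV coV" and YW: "is_YD n w \<gamma> sW actW coW"
    and b: "bij f" and L: "Vector_Spaces.linear sV sW f"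
    and fa: "\<And>p v. valid_idx n p \<Longrightarrow> f (actV p v) = actW p (f v)"
    and fc: "\<And>v t. f (coV v t) = coW (f v) t"
    and st: "standard_elem n w sV actV coV \<alpha> \<beta> r i v"
  shows "standard_elem n w sW actW coW \<alpha> \<beta> r i (f v)"
proof -
  have vsV: "vector_space sV" using YV unfolding is_YD_def by blast
  have vsW: "vector_space sW" using YW unfolding is_YD_def by blast
  have f0: "f 0 = 0" by (rule lin_zero[OF L])
  have "f v \<noteq> 0" using st b f0 unfolding standard_elem_def bij_def inj_def by metis
  moreover have "hact sW actW (hx n w) (f v) = sW \<alpha> (f v)"
    using st fa[OF valid_gidx[OF n]] lin_scale[OF L]
    unfolding standard_elem_def hx_def hgl_def hact_bs1[OF vsV] hact_bs1[OF vsW] by metis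
  moreover have "hact sW actW (hg n w) (f v) = sW \<beta> (f v)"
    using st fa[OF valid_gidx[OF n]] lin_scale[OF L]
    unfolding standard_elem_def hg_def hgl_def hact_bs1[OF vsV] hact_bs1[OF vsW] by metis
  moreover have "coW (f v) = bsingle (gidx n w r i) (f v)"
  proof
    fix t show "coW (f v) t = bsingle (gidx n w r i) (f v) t"
      using st fc[of v t, symmetric] f0 unfolding standard_elem_def by (simp add: bsingle_def)
  qed
  ultimately show ?thesis using st unfolding standard_elem_def by blast
qed

theorem corollary3p21:
  fixes n w :: nat and \<gamma> :: "'k::field_char_0"
    and sV :: "'k \<Rightarrow> 'v::ab_group_add \<Rightarrow> 'v" and actV :: "idx \<Rightarrow> 'v \<Rightarrow> 'v" and coV :: "'v \<Rightarrow> idx \<Rightarrow> 'v"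
    and sW :: "'k \<Rightarrow> 'u::ab_group_add \<Rightarrow> 'u" and actW :: "idx \<Rightarrow> 'u \<Rightarrow> 'u" and coW :: "'u \<Rightarrow> idx \<Rightarrow> 'u"
  assumes "alg_closed TYPE('k)"
    and "0 < n" and "0 < w" and "primitive_root n \<gamma>"
    and "is_YD n w \<gamma> sV actV coV" and "fin_dim sV" and "YD_simple n sV actV coV"
    and "is_YD n w \<gamma> sW actW coW" and "fin_dim sW" and "YD_simple n sW actW coW"
  shows "YD_iso n sV actV coV sW actW coW \<longleftrightarrow>
    (\<exists>\<alpha> \<beta> r i. \<alpha> \<noteq> 0 \<and> \<beta> \<noteq> 0 \<and>
       (\<exists>v. standard_elem n w sV actV coV \<alpha> \<beta> r i v) \<and>
       (\<exists>u. standard_elem n w sW actW coW \<alpha> \<beta> r i u))"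
proof
  have gnz: "\<gamma> \<noteq> 0" using assms(2,4) unfolding primitive_root_def by (auto simp: power_0_left)
  assume iso: "YD_iso n sV actV coV sW actW coW"
  then obtain f where f: "bij f" "Vector_Spaces.linear sV sW f"
      "\<And>p v. valid_idx n p \<Longrightarrow> f (actV p v) = actW p (f v)" "\<And>v t. f (coV v t) = coW (f v) t"
    unfolding YD_iso_def by blast
  have nt: "(UNIV :: 'v set) \<noteq> {0}" using assms(7) unfolding YD_simple_def by blast
  obtain \<alpha> \<beta> r i v where st: "standard_elem n w sV actV coV \<alpha> \<beta> r i v"
    using exists_standard[OF assms(1,2) gnz assms(5,6) nt] by blast
  have "standard_elem n w sW actW coW \<alpha> \<beta> r i (f v)"
    by (rule transport[OF assms(2,5,8) f st])
  then show "\<exists>\<alpha> \<beta> r i. \<alpha> \<noteq> 0 \<and> \<beta> \<noteq> 0 \<and>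
       (\<exists>v. standard_elem n w sV actV coV \<alpha> \<beta> r i v) \<and>
       (\<exists>u. standard_elem n w sW actW coW \<alpha> \<beta> r i u)"
    using st unfolding standard_elem_def by blast
next
  assume "\<exists>\<alpha> \<beta> r i. \<alpha> \<noteq> 0 \<and> \<beta> \<noteq> 0 \<and>
       (\<exists>v. standard_elem n w sV actV coV \<alpha> \<beta> r i v) \<and>
       (\<exists>u. standard_elem n w sW actW coW \<alpha> \<beta> r i u)"
  then obtain \<alpha> \<beta> r i v u where "standard_elem n w sV actV coV \<alpha> \<beta> r i v"
      "standard_elem n w sW actW coW \<alpha> \<beta> r i u" by blast
  then show "YD_iso n sV actV coV sW actW coW"
    using backward[OF assms(2,4,5,7,8,10)] by blast
qed

end
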